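(* Let $1\le r\le K\le d$ and let $\bm{A}=\begin{bmatrix}\widetilde{\bm{A}}&\bm{0}\\\bm{0}&\bm{0}\end{bmatrix}\in\mathbb{R}^{d\times K}$ with $\widetilde{\bm{A}}=\operatorname{diag}(a_1,\ldots,a_r)$, $a_1\ge\cdots\ge a_r>0$. Suppose there are indices $0=s_0<s_1<\cdots<s_p=r$ such that $a_{s_{i-1}+1}=\cdots=a_{s_i}$ for each $i$ and $a_{s_1}>\cdots>a_{s_p}$; let $h_i=s_i-s_{i-1}$ and $\delta_{ij}=\frac{a_{s_i}}{a_{s_j}}-\frac{a_{s_j}}{a_{s_i}}$ for $i\ne j$. Let $R(\bm{Q})=\bm{A}-\bm{Q}\bm{A}^T\bm{Q}$. For $\bm{q}\in\{\pm1\}^r$ let $$\mathcal{Q}_{\bm{q}}=\left\{\begin{bmatrix}\bm{U}\operatorname{diag}(\bm{q})\bm{U}^T&\bm{0}\\\bm{0}&\bm{V}\end{bmatrix}:\bm{U}=\operatorname{blkdiag}(\bm{U}_1,\ldots,\bm{U}_p),\ \bm{U}_i\in\mathcal{O}^{h_i},\ \bm{V}\in{\rm St}(d-r,K-r)\right\},$$ $$\mathcal{Q}^1_{\bm{q}}=\{\bm{U}\operatorname{diag}(\bm{q})\bm{U}^T:\bm{U}=\operatorname{blkdiag}(\bm{U}_1,\ldots,\bm{U}_p),\ \bm{U}_i\in\mathcal{O}^{h_i}\}.$$ Let $\bm{q}\in\{\pm1\}^r$ and let $\bm{Q}\in{\rm St}(d,K)$ satisfy $\operatorname{dist}(\bm{Q},\mathcal{Q}_{\bm{q}})<1$,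 and let $\bm{Q}_1$ be its upper-left $r\times r$ block. Then $$\operatorname{dist}^2(\bm{Q}_1,\mathcal{Q}^1_{\bm{q}})\le\frac1{a_r^2}\left(10+6(6p-5)\Big(\min_{i,j\in\{1,\ldots,p\},\,i\ne j}\delta_{ij}^2\Big)^{-1}\right)\|R(\bm{Q})\|_F^2.$$
   Context: $\mathcal{O}^m$ is the set of $m\times m$ orthogonal matrices; ${\rm St}(m,k)=\{\bm{V}\in\mathbb{R}^{m\times k}:\bm{V}^T\bm{V}=\bm{I}_k\}$; $\operatorname{blkdiag}$ is the block diagonal matrix; $\operatorname{dist}(\bm{Q},\mathcal{S})=\inf_{\bm{W}\in\mathcal{S}}\|\bm{Q}-\bm{W}\|_F$. When $p=1$ the minimum over the empty index set is interpreted as $+\infty$, so that its reciprocal is $0$. *)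

theory Defs
  imports "Jordan_Normal_Form.Matrix"
begin

(* Scalar sequences a, q, s follow the paper's 1-based indexing (a 1 .. a r, s 0 .. s p),
   matrix entries are 0-based as in JNF. *)

definition fro_norm :: "real mat \<Rightarrow> real" where
  "fro_norm M = sqrt (\<Sum>i<dim_row M. \<Sum>j<dim_col M. (M $$ (i,j))\<^sup>2)"

definition dist_set :: "real mat \<Rightarrow> real mat set \<Rightarrow> real" where
  "dist_set Q S = Inf ((\<lambda>W. fro_norm (Q - W)) ` S)"

definition orth_mats :: "nat \<Rightarrow> real mat set" where
  "orth_mats m = {U. U \<in> carrier_mat m m \<and> transpose_mat U * U = 1\<^sub>m m}"

definition stiefel :: "nat \<Rightarrow> nat \<Rightarrow> real mat set" where
  "stiefel m k = {V. V \<in> carrier_mat m k \<and> transpose_mat V * V = 1\<^sub>m k}"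

(* blkdiag(U_1,...,U_p) where block k occupies rows/cols s(k-1) .. s k - 1 (0-based) *)
definition blkdiag :: "(nat \<Rightarrow> nat) \<Rightarrow> nat \<Rightarrow> (nat \<Rightarrow> real mat) \<Rightarrow> real mat" where
  "blkdiag s p Us = mat (s p) (s p) (\<lambda>(i,j).
     if \<exists>k\<in>{1..p}. s (k-1) \<le> i \<and> i < s k \<and> s (k-1) \<le> j \<and> j < s k
     then (let k = (THE k. k \<in> {1..p} \<and> s (k-1) \<le> i \<and> i < s k)
           in Us k $$ (i - s (k-1), j - s (k-1)))
     else 0)"

definition diag_vec :: "nat \<Rightarrow> (nat \<Rightarrow> real) \<Rightarrow> real mat" where
  "diag_vec r q = mat r r (\<lambda>(i,j). if i = j then q (i+1) else 0)"

definition A_mat :: "nat \<Rightarrow> nat \<Rightarrow> nat \<Rightarrow> (nat \<Rightarrow> real) \<Rightarrow> real mat" where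
  "A_mat d K r a = mat d K (\<lambda>(i,j). if i = j \<and> i < r then a (i+1) else 0)"

definition R_res :: "real mat \<Rightarrow> real mat \<Rightarrow> real mat" where
  "R_res A Q = A - Q * transpose_mat A * Q"

definition blk_orth :: "(nat \<Rightarrow> nat) \<Rightarrow> nat \<Rightarrow> real mat set" where
  "blk_orth s p = {blkdiag s p Us | Us. \<forall>i\<in>{1..p}. Us i \<in> orth_mats (s i - s (i-1))}"

definition Qset1 :: "(nat \<Rightarrow> nat) \<Rightarrow> nat \<Rightarrow> (nat \<Rightarrow> real) \<Rightarrow> real mat set" where
  "Qset1 s p q = {U * diag_vec (s p) q * transpose_mat U | U. U \<in> blk_orth s p}"

definition Qset :: "nat \<Rightarrow> nat \<Rightarrow> (nat \<Rightarrow> nat) \<Rightarrow> nat \<Rightarrow> (nat \<Rightarrow> real) \<Rightarrow> real mat set" where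
  "Qset d K s p q = {four_block_mat (U * diag_vec (s p) q * transpose_mat U) (0\<^sub>m (s p) (K - s p))
                        (0\<^sub>m (d - s p) (s p)) V
                     | U V. U \<in> blk_orth s p \<and> V \<in> stiefel (d - s p) (K - s p)}"

definition upper_left :: "nat \<Rightarrow> real mat \<Rightarrow> real mat" where
  "upper_left r Q = mat r r (\<lambda>(i,j). Q $$ (i,j))"

definition delta :: "(nat \<Rightarrow> real) \<Rightarrow> (nat \<Rightarrow> nat) \<Rightarrow> nat \<Rightarrow> nat \<Rightarrow> real" where
  "delta a s i j = a (s i) / a (s j) - a (s j) / a (s i)"

(* (min_{i \<noteq> j} delta_ij^2)^{-1}, with value 0 when p = 1 (empty min = +infinity) *)
definition inv_min_delta_sq :: "(nat \<Rightarrow> real) \<Rightarrow> (nat \<Rightarrow> nat) \<Rightarrow> nat \<Rightarrow> real" where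
  "inv_min_delta_sq a s p =
     (if p \<le> 1 then 0
      else 1 / Min {(delta a s i j)\<^sup>2 | i j. i \<in> {1..p} \<and> j \<in> {1..p} \<and> i \<noteq> j})"

end

theory Submission
  imports Defs "Jordan_Normal_Form.Char_Poly" "HOL-Computational_Algebra.Fundamental_Theorem_Algebra"
begin

lemma mult_mat_vec_entry:
  assumes "A \<in> carrier_mat n m" "v \<in> carrier_vec m" "i < n"
  shows "(A *\<^sub>v v) $ i = (\<Sum>j<m. A $$ (i,j) * v $ j)"
  using assms by (auto simp: scalar_prod_def row_def atLeast0LessThan intro!: sum.cong)

lemma real_sym_eigen:
  fixes S :: "real mat"
  assumes S: "S \<in> carrier_mat n n" and sym: "\<And>i j. i < n \<Longrightarrow> j < n \<Longrightarrow> S $$ (i,j) = S $$ (j,i)"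
    and n: "n > 0"
  shows "\<exists>lam u. u \<in> carrier_vec n \<and> u \<bullet> u = 1 \<and> S *\<^sub>v u = lam \<cdot>\<^sub>v u"
proof -
  define Sc where "Sc = map_mat complex_of_real S"
  have Sc: "Sc \<in> carrier_mat n n" using S by (auto simp: Sc_def)
  have "degree (char_poly Sc) = n" using degree_monic_char_poly[OF Sc] by auto
  hence "\<not> constant (poly (char_poly Sc))" using n by (simp add: constant_degree)
  then obtain z where "poly (char_poly Sc) z = 0" using fundamental_theorem_of_algebra by blast
  hence "eigenvalue Sc z" using eigenvalue_root_char_poly[OF Sc] by simp
  then obtain v where ev: "eigenvector Sc v z" unfolding eigenvalue_def by auto
  hence v: "v \<in> carrier_vec n" and v0: "v \<noteq> 0\<^sub>v n" and eq: "Sc *\<^sub>v v = z \<cdot>\<^sub>v v"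
    using Sc unfolding eigenvector_def by auto
  have eqi: "(\<Sum>j<n. complex_of_real (S $$ (i,j)) * v $ j) = z * v $ i" if "i < n" for i
  proof -
    have "(Sc *\<^sub>v v) $ i = z * v $ i" using eq that v by simp
    moreover have "(Sc *\<^sub>v v) $ i = (\<Sum>j<n. Sc $$ (i,j) * v $ j)"
      by (rule mult_mat_vec_entry[OF Sc v that])
    ultimately show ?thesis using that S by (simp add: Sc_def)
  qed
  define N where "N = (\<Sum>i<n. cnj (v $ i) * v $ i)"
  define P where "P = (\<Sum>i<n. \<Sum>j<n. cnj (v $ i) * (complex_of_real (S $$ (i,j)) * v $ j))"
  have PN: "P = z * N"
  proof -
    have "P = (\<Sum>i<n. cnj (v $ i) * (\<Sum>j<n. complex_of_real (S $$ (i,j)) * v $ j))"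
      unfolding P_def by (simp add: sum_distrib_left)
    also have "\<dots> = (\<Sum>i<n. z * (cnj (v $ i) * v $ i))"
      by (intro sum.cong refl, simp add: eqi)
    also have "\<dots> = z * N" unfolding N_def by (simp add: sum_distrib_left)
    finally show ?thesis .
  qed
  have "cnj P = (\<Sum>i<n. \<Sum>j<n. v $ i * (complex_of_real (S $$ (i,j)) * cnj (v $ j)))"
    unfolding P_def by (simp add: cnj_sum)
  also have "\<dots> = (\<Sum>j<n. \<Sum>i<n. v $ i * (complex_of_real (S $$ (i,j)) * cnj (v $ j)))"
    by (rule sum.swap)
  also have "\<dots> = P" unfolding P_def
    by (intro sum.cong refl, simp add: sym mult.commute mult.left_commute)
  finally have cP: "cnj P = P" .
  have Nr: "N = complex_of_real (\<Sum>i<n. (cmod (v $ i))\<^sup>2)"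
  proof -
    have "N = (\<Sum>i<n. complex_of_real ((cmod (v $ i))\<^sup>2))"
      unfolding N_def by (intro sum.cong refl, simp only: complex_norm_square mult.commute)
    thus ?thesis by (simp only: of_real_sum)
  qed
  obtain i0 where i0: "i0 < n" "v $ i0 \<noteq> 0" using v0 v by (metis eq_vecI index_zero_vec(1) carrier_vecD index_zero_vec(2))
  have "(\<Sum>i<n. (cmod (v $ i))\<^sup>2) \<ge> (cmod (v $ i0))\<^sup>2"
    by (rule member_le_sum) (use i0 in auto)
  moreover have "(cmod (v $ i0))\<^sup>2 > 0" using i0 by simp
  ultimately have Npos: "(\<Sum>i<n. (cmod (v $ i))\<^sup>2) > 0" by linarith
  have "N \<noteq> 0" using Npos Nr by (metis of_real_eq_0_iff less_irrefl)
  hence zdef: "z = P / N" using PN by (simp add: field_simps)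
  have "cnj z = z" unfolding zdef using cP Nr by simp
  then obtain lam where zl: "z = complex_of_real lam" by (metis Reals_cnj_iff Reals_cases)
  define x where "x = vec n (\<lambda>i. Re (v $ i))"
  define y where "y = vec n (\<lambda>i. Im (v $ i))"
  have x: "x \<in> carrier_vec n" and y: "y \<in> carrier_vec n" by (auto simp: x_def y_def)
  have Sx: "S *\<^sub>v x = lam \<cdot>\<^sub>v x"
  proof (rule eq_vecI)
    fix i assume "i < dim_vec (lam \<cdot>\<^sub>v x)"
    hence i: "i < n" by (simp add: x_def)
    have "(S *\<^sub>v x) $ i = (\<Sum>j<n. S $$ (i,j) * x $ j)" by (rule mult_mat_vec_entry[OF S x i])
    also have "\<dots> = Re (\<Sum>j<n. complex_of_real (S $$ (i,j)) * v $ j)"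
      by (simp add: Re_sum x_def)
    also have "\<dots> = lam * x $ i" using eqi[OF i] by (simp add: zl x_def i)
    finally show "(S *\<^sub>v x) $ i = (lam \<cdot>\<^sub>v x) $ i" using i x by simp
  qed (use S x in auto)
  have Sy: "S *\<^sub>v y = lam \<cdot>\<^sub>v y"
  proof (rule eq_vecI)
    fix i assume "i < dim_vec (lam \<cdot>\<^sub>v y)"
    hence i: "i < n" by (simp add: y_def)
    have "(S *\<^sub>v y) $ i = (\<Sum>j<n. S $$ (i,j) * y $ j)" by (rule mult_mat_vec_entry[OF S y i])
    also have "\<dots> = Im (\<Sum>j<n. complex_of_real (S $$ (i,j)) * v $ j)"
      by (simp add: Im_sum y_def)
    also have "\<dots> = lam * y $ i" using eqi[OF i] by (simp add: zl y_def i)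
    finally show "(S *\<^sub>v y) $ i = (lam \<cdot>\<^sub>v y) $ i" using i y by simp
  qed (use S y in auto)
  have "\<exists>w. w \<in> carrier_vec n \<and> S *\<^sub>v w = lam \<cdot>\<^sub>v w \<and> w \<bullet> w > 0"
  proof (cases "Re (v $ i0) = 0")
    case True
    hence "Im (v $ i0) \<noteq> 0" using i0 complex_eq_iff by auto
    hence "y \<bullet> y > 0"
    proof -
      have "y \<bullet> y = (\<Sum>i<n. (y $ i)^2)" using y by (simp add: scalar_prod_def atLeast0LessThan power2_eq_square)
      moreover have "(\<Sum>i<n. (y $ i)^2) \<ge> (y $ i0)^2" by (rule member_le_sum) (use i0 in auto)
      moreover have "(y $ i0)^2 > 0" using \<open>Im (v $ i0) \<noteq> 0\<close> i0 by (simp add: y_def)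
      ultimately show ?thesis by linarith
    qed
    thus ?thesis using y Sy by blast
  next
    case False
    hence "x \<bullet> x > 0"
    proof -
      have "x \<bullet> x = (\<Sum>i<n. (x $ i)^2)" using x by (simp add: scalar_prod_def atLeast0LessThan power2_eq_square)
      moreover have "(\<Sum>i<n. (x $ i)^2) \<ge> (x $ i0)^2" by (rule member_le_sum) (use i0 in auto)
      moreover have "(x $ i0)^2 > 0" using False i0 by (simp add: x_def)
      ultimately show ?thesis by linarith
    qed
    thus ?thesis using x Sx by blast
  qed
  then obtain w where w: "w \<in> carrier_vec n" "S *\<^sub>v w = lam \<cdot>\<^sub>v w" "w \<bullet> w > 0" by blast
  define u where "u = (1 / sqrt (w \<bullet> w)) \<cdot>\<^sub>v w"
  have u: "u \<in> carrier_vec n" using w by (simp add: u_def)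
  have "u \<bullet> u = (1 / sqrt (w \<bullet> w)) * ((1 / sqrt (w \<bullet> w)) * (w \<bullet> w))"
    unfolding u_def using w by (simp add: smult_scalar_prod_distrib scalar_prod_smult_distrib)
  also have "\<dots> = 1" using w(3) by (simp add: field_simps)
  finally have uu: "u \<bullet> u = 1" .
  have "S *\<^sub>v u = lam \<cdot>\<^sub>v u" unfolding u_def using w S
    by (simp add: mult_mat_vec smult_smult_assoc mult.commute)
  thus ?thesis using u uu by blast
qed


lemma mat_diag_conj_entry:
  fixes X Y :: "'a::comm_ring_1 mat"
  assumes X: "X \<in> carrier_mat p n" and Y: "Y \<in> carrier_mat q n" and i: "i < p" and j: "j < q"
  shows "(X * mat_diag n lam * transpose_mat Y) $$ (i,j) = (\<Sum>k<n. X $$ (i,k) * lam k * Y $$ (j,k))"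
proof -
  have "X * mat_diag n lam = mat p n (\<lambda>(i, j). X $$ (i, j) * lam j)"
    using mat_diag_mult_right[OF X] .
  thus ?thesis using X Y i j
    by (simp add: scalar_prod_def row_def col_def atLeast0LessThan mult.assoc)
qed

lemma mat_mult_entry:
  assumes "A \<in> carrier_mat n m" "B \<in> carrier_mat m k" "i < n" "j < k"
  shows "(A * B) $$ (i,j) = (\<Sum>t<m. A $$ (i,t) * B $$ (t,j))"
  using assms by (simp add: scalar_prod_def row_def col_def atLeast0LessThan)

lemma ite01_mult[simp]: "(if P then 1 else 0) * (x::real) = (if P then x else 0)"
  "x * (if P then 1 else 0) = (if P then x else 0)" by auto

definition householder :: "nat \<Rightarrow> real vec \<Rightarrow> real mat" where
  "householder n u = (let w = u - unit_vec n 0; c = (if w \<bullet> w = 0 then 0 else 2 / (w \<bullet> w)) in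
     mat n n (\<lambda>(i,j). (if i = j then 1 else 0) - c * w $ i * w $ j))"

lemma householder:
  assumes u: "u \<in> carrier_vec n" and uu: "u \<bullet> u = 1" and n: "n > 0"
  defines "H \<equiv> householder n u"
  shows "H \<in> carrier_mat n n" "transpose_mat H = H" "H * H = 1\<^sub>m n" "H *\<^sub>v u = unit_vec n 0"
proof -
  define w where "w = u - unit_vec n 0"
  define c where "c = (if w \<bullet> w = 0 then 0 else 2 / (w \<bullet> w))"
  have w: "w \<in> carrier_vec n" using u by (simp add: w_def)
  have Hd: "H = mat n n (\<lambda>(i,j). (if i = j then 1 else 0) - c * w $ i * w $ j)"
    unfolding H_def householder_def Let_def w_def c_def ..
  show Hc: "H \<in> carrier_mat n n" unfolding Hd by simp
  show "transpose_mat H = H" unfolding Hd by (intro eq_matI, auto)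
  have ww: "w \<bullet> w = (\<Sum>k<n. w $ k * w $ k)" using w by (simp add: scalar_prod_def atLeast0LessThan)
  have cw: "c * c * (w \<bullet> w) = 2 * c" unfolding c_def by (auto simp: field_simps power2_eq_square)
  show "H * H = 1\<^sub>m n"
  proof (rule eq_matI)
    fix i j assume ij: "i < dim_row (1\<^sub>m n :: real mat)" "j < dim_col (1\<^sub>m n :: real mat)"
    hence i: "i < n" and j: "j < n" by auto
    have "(H * H) $$ (i,j) = (\<Sum>k<n. ((if i = k then 1 else 0) - c * w $ i * w $ k) * ((if k = j then 1 else 0) - c * w $ k * w $ j))"
      using mat_mult_entry[OF Hc Hc i j] i j by (simp add: Hd)
    also have "\<dots> = (\<Sum>k<n. (if i = k then 1 else 0) * (if k = j then 1 else 0)) - (\<Sum>k<n. (if i = k then 1 else 0) * (c * w $ k * w $ j))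
       - (\<Sum>k<n. (c * w $ i * w $ k) * (if k = j then 1 else 0)) + (\<Sum>k<n. (c * w $ i * w $ k) * (c * w $ k * w $ j))"
      by (simp add: algebra_simps sum_subtractf sum.distrib)
    also have "\<dots> = (if i = j then 1 else 0) - c * w $ i * w $ j - c * w $ i * w $ j + c * c * w $ i * w $ j * (\<Sum>k<n. w $ k * w $ k)"
    proof -
      have a: "(\<Sum>k<n. (if i = k then 1 else 0) * (if k = j then 1 else (0::real))) = (if i = j then 1 else 0)"
        using i by (simp add: sum.delta)
      have b: "(\<Sum>k<n. (if i = k then 1 else 0) * (c * w $ k * w $ j)) = c * w $ i * w $ j"
        using i by (simp add: sum.delta)
      have cc: "(\<Sum>k<n. (c * w $ i * w $ k) * (if k = j then 1 else 0)) = c * w $ i * w $ j"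
        using j by (simp add: sum.delta)
      have d: "(\<Sum>k<n. (c * w $ i * w $ k) * (c * w $ k * w $ j)) = c * c * w $ i * w $ j * (\<Sum>k<n. w $ k * w $ k)"
        by (simp add: sum_distrib_left algebra_simps)
      show ?thesis using a b cc d by simp
    qed
    also have "\<dots> = (if i = j then 1 else 0)"
    proof -
      have e: "c * c * (\<Sum>k<n. w $ k * w $ k) = 2 * c" using cw ww by simp
      have "c * c * w $ i * w $ j * (\<Sum>k<n. w $ k * w $ k) = (c * c * (\<Sum>k<n. w $ k * w $ k)) * (w $ i * w $ j)"
        by (simp add: algebra_simps)
      also have "\<dots> = 2 * c * w $ i * w $ j" by (subst e) (simp add: algebra_simps)
      finally have X: "c * c * w $ i * w $ j * (\<Sum>k<n. w $ k * w $ k) = 2 * c * w $ i * w $ j" .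
      show ?thesis using X by linarith
    qed
    also have "\<dots> = (1\<^sub>m n :: real mat) $$ (i,j)" using i j by simp
    finally show "(H * H) $$ (i,j) = (1\<^sub>m n :: real mat) $$ (i,j)" .
  qed (use Hc in auto)
  show "H *\<^sub>v u = unit_vec n 0"
  proof (rule eq_vecI)
    fix i assume "i < dim_vec (unit_vec n 0 :: real vec)"
    hence i: "i < n" by simp
    have uu': "(\<Sum>k<n. u $ k * u $ k) = 1" using uu u by (simp add: scalar_prod_def atLeast0LessThan)
    have wk: "w $ k = u $ k - (if k = 0 then 1 else 0)" if "k < n" for k using that u by (simp add: w_def)
    have "w \<bullet> u = (\<Sum>k<n. u $ k * u $ k - (if k = 0 then u $ k else 0))"
      using w u by (auto simp: scalar_prod_def atLeast0LessThan wk algebra_simps intro!: sum.cong)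
    also have "\<dots> = 1 - u $ 0" using n by (simp add: sum_subtractf uu' sum.delta)
    finally have wu: "w \<bullet> u = 1 - u $ 0" .
    have "w \<bullet> w = (\<Sum>k<n. u $ k * u $ k - (if k = 0 then 2 * u $ k else 0) + (if k = 0 then 1 else 0))"
      using w u by (auto simp: scalar_prod_def atLeast0LessThan wk algebra_simps intro!: sum.cong)
    also have "\<dots> = 2 - 2 * u $ 0" using n by (simp add: sum.distrib sum_subtractf uu' sum.delta)
    finally have wwe: "w \<bullet> w = 2 - 2 * u $ 0" .
    have "(H *\<^sub>v u) $ i = (\<Sum>k<n. ((if i = k then 1 else 0) - c * w $ i * w $ k) * u $ k)"
      using mult_mat_vec_entry[OF Hc u i] i by (simp add: Hd)
    also have "\<dots> = u $ i - c * w $ i * (\<Sum>k<n. w $ k * u $ k)"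
    proof -
      have "(\<Sum>k<n. ((if i = k then 1 else 0) - c * w $ i * w $ k) * u $ k)
          = (\<Sum>k<n. (if i = k then u $ k else 0) - c * w $ i * (w $ k * u $ k))"
        by (intro sum.cong refl) (simp add: algebra_simps)
      also have "\<dots> = u $ i - c * w $ i * (\<Sum>k<n. w $ k * u $ k)"
        using i by (simp add: sum_subtractf sum_distrib_left sum.delta)
      finally show ?thesis .
    qed
    also have "(\<Sum>k<n. w $ k * u $ k) = w \<bullet> u" using u by (simp add: scalar_prod_def atLeast0LessThan)
    also have "u $ i - c * w $ i * (w \<bullet> u) = unit_vec n 0 $ i"
    proof (cases "w \<bullet> w = 0")
      case True
      hence "u $ 0 = 1" using wwe by simp
      have "w $ i = 0"
      proof -
        have "(\<Sum>k<n. w $ k * w $ k) = 0" using True ww by simp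
        hence "\<forall>k\<in>{..<n}. w $ k * w $ k = 0" by (subst (asm) sum_nonneg_eq_0_iff) auto
        thus ?thesis using i by auto
      qed
      thus ?thesis using i u unfolding w_def by (simp add: c_def True)
    next
      case False
      have "c * (w \<bullet> u) = 1" using False wu wwe unfolding c_def by (simp add: field_simps)
      hence "u $ i - c * w $ i * (w \<bullet> u) = u $ i - w $ i"
        by (metis mult.commute mult.left_commute mult_1_right)
      thus ?thesis using i u unfolding w_def by simp
    qed
    finally show "(H *\<^sub>v u) $ i = unit_vec n 0 $ i" .
  qed (use Hc in auto)
qed


lemma mat_vec_unit_entry:
  fixes M :: "real mat"
  assumes "M \<in> carrier_mat n n" "i < n" "j < n"
  shows "(M *\<^sub>v unit_vec n j) $ i = M $$ (i,j)"
proof -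
  have "(M *\<^sub>v unit_vec n j) $ i = row M i \<bullet> unit_vec n j" using assms by simp
  also have "\<dots> = row M i $ j" using assms(3) by (rule scalar_prod_right_unit)
  also have "\<dots> = M $$ (i,j)" using assms by simp
  finally show ?thesis .
qed

lemma assoc5:
  assumes A: "A \<in> carrier_mat n n" and B: "B \<in> carrier_mat n n" and C: "C \<in> carrier_mat n n"
    and D: "D \<in> carrier_mat n n" and F: "F \<in> carrier_mat n n"
  shows "A * (B * C * D) * F = (A * B) * C * (D * F)"
proof -
  have BC: "B * C \<in> carrier_mat n n" using B C by (rule mult_carrier_mat)
  have BCD: "B * C * D \<in> carrier_mat n n" using BC D by (rule mult_carrier_mat)
  have AB: "A * B \<in> carrier_mat n n" using A B by (rule mult_carrier_mat)
  have ABC: "A * B * C \<in> carrier_mat n n" using AB C by (rule mult_carrier_mat)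
  have DF: "D * F \<in> carrier_mat n n" using D F by (rule mult_carrier_mat)
  have "A * (B * C * D) * F = A * ((B * C * D) * F)" by (rule assoc_mult_mat[OF A BCD F])
  also have "(B * C * D) * F = (B * C) * (D * F)" by (rule assoc_mult_mat[OF BC D F])
  also have "A * ((B * C) * (D * F)) = (A * (B * C)) * (D * F)" by (rule assoc_mult_mat[OF A BC DF, symmetric])
  also have "A * (B * C) = A * B * C" by (rule assoc_mult_mat[OF A B C, symmetric])
  finally show ?thesis .
qed

theorem spectral_thm:
  fixes S :: "real mat"
  assumes "S \<in> carrier_mat n n" "\<And>i j. i < n \<Longrightarrow> j < n \<Longrightarrow> S $$ (i,j) = S $$ (j,i)"
  shows "\<exists>V lam. V \<in> carrier_mat n n \<and> transpose_mat V * V = 1\<^sub>m n \<and> S = V * mat_diag n lam * transpose_mat V"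
  using assms
proof (induction n arbitrary: S)
  case 0
  have "S = 1\<^sub>m 0 * mat_diag 0 (\<lambda>_. 0) * transpose_mat (1\<^sub>m 0)"
    using 0 by (intro eq_matI) auto
  thus ?case by (intro exI[of _ "1\<^sub>m 0"] exI[of _ "\<lambda>_. 0"]) auto
next
  case (Suc m S)
  define n where "n = Suc m"
  have S: "S \<in> carrier_mat n n" using Suc(2) n_def by simp
  have Ssym: "\<And>i j. i < n \<Longrightarrow> j < n \<Longrightarrow> S $$ (i,j) = S $$ (j,i)" using Suc(3) n_def by simp
  have STS: "transpose_mat S = S" using S Ssym by (intro eq_matI) auto
  obtain lam0 u where u: "u \<in> carrier_vec n" "u \<bullet> u = 1" "S *\<^sub>v u = lam0 \<cdot>\<^sub>v u"
    using real_sym_eigen[OF S Ssym] n_def by auto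
  define H where "H = householder n u"
  have n0: "n > 0" using n_def by simp
  note Hf = householder[OF u(1) u(2) n0, folded H_def]
  have H: "H \<in> carrier_mat n n" using Hf by simp
  have HT: "transpose_mat H = H" using Hf by simp
  have HH: "H * H = 1\<^sub>m n" using Hf by simp
  have Hu: "H *\<^sub>v u = unit_vec n 0" using Hf by simp
  have He: "H *\<^sub>v unit_vec n 0 = u"
  proof -
    have "H *\<^sub>v (H *\<^sub>v u) = (H * H) *\<^sub>v u" using H u by (simp add: assoc_mult_mat_vec)
    thus ?thesis using Hu HH u by simp
  qed
  define M where "M = H * S * H"
  have M: "M \<in> carrier_mat n n" using H S by (simp add: M_def)
  have MT: "transpose_mat M = M"
  proof -
    have "transpose_mat M = transpose_mat H * transpose_mat (H * S)"
      unfolding M_def using H S by (simp del: assoc_mult_mat add: transpose_mult[of "H * S" n n H n])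
    also have "\<dots> = H * (S * H)" using H S by (simp add: transpose_mult[of H n n S n] HT STS)
    also have "\<dots> = M" unfolding M_def using H S by simp
    finally show ?thesis .
  qed
  have Msym: "M $$ (i,j) = M $$ (j,i)" if "i < n" "j < n" for i j
  proof -
    have "M $$ (i,j) = transpose_mat M $$ (j,i)" using that M by simp
    thus ?thesis using MT by simp
  qed
  have Me: "M *\<^sub>v unit_vec n 0 = lam0 \<cdot>\<^sub>v unit_vec n 0"
  proof -
    have "M *\<^sub>v unit_vec n 0 = (H * S) *\<^sub>v (H *\<^sub>v unit_vec n 0)"
      unfolding M_def using H S by (simp del: assoc_mult_mat add: assoc_mult_mat_vec[of "H * S" n n H n])
    also have "\<dots> = H *\<^sub>v (S *\<^sub>v (H *\<^sub>v unit_vec n 0))"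
      using H S by (simp del: assoc_mult_mat add: assoc_mult_mat_vec[of H n n S n])
    also have "\<dots> = H *\<^sub>v (lam0 \<cdot>\<^sub>v u)" using He u by simp
    also have "\<dots> = lam0 \<cdot>\<^sub>v unit_vec n 0" using H u Hu by (simp add: mult_mat_vec)
    finally show ?thesis .
  qed
  have Mcol: "M $$ (i,0) = (if i = 0 then lam0 else 0)" if "i < n" for i
  proof -
    have "M $$ (i,0) = (M *\<^sub>v unit_vec n 0) $ i" using mat_vec_unit_entry[OF M that n0] by simp
    also have "\<dots> = (if i = 0 then lam0 else 0)" using Me that by simp
    finally show ?thesis .
  qed
  define S' where "S' = mat m m (\<lambda>(i,j). M $$ (Suc i, Suc j))"
  have S': "S' \<in> carrier_mat m m" by (simp add: S'_def)
  have S'sym: "S' $$ (i,j) = S' $$ (j,i)" if "i < m" "j < m" for i j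
    using that Msym[of "Suc i" "Suc j"] by (simp add: S'_def n_def)
  obtain V' lam' where V': "V' \<in> carrier_mat m m" "transpose_mat V' * V' = 1\<^sub>m m"
    "S' = V' * mat_diag m lam' * transpose_mat V'"
    using Suc.IH[OF S' S'sym] by blast
  define E where "E = mat n n (\<lambda>(i,j). if i = 0 \<and> j = 0 then 1 else if i = 0 \<or> j = 0 then 0 else V' $$ (i-1, j-1))"
  have E: "E \<in> carrier_mat n n" by (simp add: E_def)
  define lam where "lam = (\<lambda>k. if k = 0 then lam0 else lam' (k - 1))"
  have ME: "M = E * mat_diag n lam * transpose_mat E"
  proof (rule eq_matI)
    fix i j assume "i < dim_row (E * mat_diag n lam * transpose_mat E)" "j < dim_col (E * mat_diag n lam * transpose_mat E)"
    hence i: "i < n" and j: "j < n" using E by auto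
    have "(E * mat_diag n lam * transpose_mat E) $$ (i,j) = (\<Sum>k<n. E $$ (i,k) * lam k * E $$ (j,k))"
      by (rule mat_diag_conj_entry[OF E E i j])
    also have "\<dots> = E $$ (i,0) * lam 0 * E $$ (j,0) + (\<Sum>k<m. E $$ (i,Suc k) * lam (Suc k) * E $$ (j,Suc k))"
      unfolding n_def by (subst sum.lessThan_Suc_shift) simp
    also have "\<dots> = M $$ (i,j)"
    proof (cases i)
      case 0
      have "M $$ (i,j) = (if j = 0 then lam0 else 0)" using Msym[OF i j] Mcol[OF j] 0 by simp
      thus ?thesis using 0 i j by (simp add: E_def lam_def n_def)
    next
      case (Suc i')
      show ?thesis
      proof (cases j)
        case 0
        thus ?thesis using Suc i j Mcol[OF i] by (simp add: E_def lam_def n_def)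
      next
        case (Suc j')
        have i': "i' < m" and j': "j' < m" using \<open>i = Suc i'\<close> Suc i j n_def by auto
        have "(\<Sum>k<m. E $$ (i,Suc k) * lam (Suc k) * E $$ (j,Suc k)) = (\<Sum>k<m. V' $$ (i',k) * lam' k * V' $$ (j',k))"
          using \<open>i = Suc i'\<close> Suc i j n_def by (intro sum.cong refl) (simp add: E_def lam_def)
        also have "\<dots> = (V' * mat_diag m lam' * transpose_mat V') $$ (i',j')"
          by (rule mat_diag_conj_entry[OF V'(1) V'(1) i' j', symmetric])
        also have "\<dots> = S' $$ (i',j')" using V'(3) by simp
        also have "\<dots> = M $$ (i,j)" using \<open>i = Suc i'\<close> Suc i' j' by (simp add: S'_def)
        finally show ?thesis using \<open>i = Suc i'\<close> Suc i j n_def by (simp add: E_def)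
      qed
    qed
    finally show "M $$ (i,j) = (E * mat_diag n lam * transpose_mat E) $$ (i,j)" by simp
  qed (use M E in auto)
  have EE: "transpose_mat E * E = 1\<^sub>m n"
  proof (rule eq_matI)
    fix i j assume "i < dim_row (1\<^sub>m n :: real mat)" "j < dim_col (1\<^sub>m n :: real mat)"
    hence i: "i < n" and j: "j < n" by auto
    have "(transpose_mat E * E) $$ (i,j) = (\<Sum>k<n. E $$ (k,i) * E $$ (k,j))"
      using mat_mult_entry[of "transpose_mat E" n n E n i j] E i j by simp
    also have "\<dots> = E $$ (0,i) * E $$ (0,j) + (\<Sum>k<m. E $$ (Suc k,i) * E $$ (Suc k,j))"
      unfolding n_def by (subst sum.lessThan_Suc_shift) simp
    also have "\<dots> = (1\<^sub>m n :: real mat) $$ (i,j)"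
    proof (cases i)
      case 0
      thus ?thesis using i j by (simp add: E_def n_def)
    next
      case (Suc i')
      show ?thesis
      proof (cases j)
        case 0
        thus ?thesis using Suc i j by (simp add: E_def n_def)
      next
        case (Suc j')
        have i': "i' < m" and j': "j' < m" using \<open>i = Suc i'\<close> Suc i j n_def by auto
        have "(\<Sum>k<m. E $$ (Suc k,i) * E $$ (Suc k,j)) = (\<Sum>k<m. V' $$ (k,i') * V' $$ (k,j'))"
          using \<open>i = Suc i'\<close> Suc i j n_def by (intro sum.cong refl) (simp add: E_def)
        also have "\<dots> = (transpose_mat V' * V') $$ (i',j')"
          using mat_mult_entry[of "transpose_mat V'" m m V' m i' j'] V'(1) i' j' by simp
        also have "\<dots> = (if i' = j' then 1 else 0)" using V'(2) i' j' by simp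
        finally show ?thesis using \<open>i = Suc i'\<close> Suc i j n_def by (simp add: E_def)
      qed
    qed
    finally show "(transpose_mat E * E) $$ (i,j) = (1\<^sub>m n :: real mat) $$ (i,j)" .
  qed (use E in auto)
  define V where "V = H * E"
  have V: "V \<in> carrier_mat n n" using H E by (simp add: V_def)
  have VT: "transpose_mat V = transpose_mat E * H" unfolding V_def using H E by (simp add: transpose_mult[of _ n n] HT)
  have ET: "transpose_mat E \<in> carrier_mat n n" using E by simp
  have VV: "transpose_mat V * V = 1\<^sub>m n"
  proof -
    have "transpose_mat V * V = (transpose_mat E * H) * (H * E)" unfolding VT by (simp add: V_def)
    also have "\<dots> = transpose_mat E * (H * (H * E))" using ET H E by (simp add: assoc_mult_mat[of _ n n _ n _ n])
    also have "H * (H * E) = (H * H) * E" using H E by (simp add: assoc_mult_mat[of _ n n _ n _ n])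
    finally show ?thesis using HH EE E by simp
  qed
  have "S = (H * H) * S * (H * H)" using HH S by simp
  also have "\<dots> = H * M * H" unfolding M_def using H S by (simp add: assoc_mult_mat[of _ n n _ n _ n])
  also have "\<dots> = H * (E * mat_diag n lam * transpose_mat E) * H" using ME by simp
  also have "\<dots> = V * mat_diag n lam * transpose_mat V"
    unfolding VT unfolding V_def by (rule assoc5[OF H E _ ET H]) simp
  finally have "S = V * mat_diag n lam * transpose_mat V" .
  thus ?case using V VV n_def by blast
qed


lemma cs_sum:
  fixes x y :: "'b \<Rightarrow> real"
  assumes "finite A"
  shows "(\<Sum>i\<in>A. x i * y i)^2 \<le> (\<Sum>i\<in>A. (x i)^2) * (\<Sum>i\<in>A. (y i)^2)"
proof -
  have "0 \<le> (\<Sum>i\<in>A. \<Sum>j\<in>A. (x i * y j - x j * y i)^2)" by (intro sum_nonneg) auto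
  also have "\<dots> = (\<Sum>i\<in>A. \<Sum>j\<in>A. (x i)^2 * (y j)^2 + (x j)^2 * (y i)^2 - 2 * ((x i * y i) * (x j * y j)))"
    by (intro sum.cong refl) (simp add: power2_eq_square algebra_simps)
  also have "\<dots> = (\<Sum>i\<in>A. \<Sum>j\<in>A. (x i)^2 * (y j)^2) + (\<Sum>i\<in>A. \<Sum>j\<in>A. (x j)^2 * (y i)^2)
       - 2 * (\<Sum>i\<in>A. \<Sum>j\<in>A. (x i * y i) * (x j * y j))"
    by (simp add: sum.distrib sum_subtractf sum_distrib_left)
  also have "(\<Sum>i\<in>A. \<Sum>j\<in>A. (x i)^2 * (y j)^2) = (\<Sum>i\<in>A. (x i)^2) * (\<Sum>i\<in>A. (y i)^2)"
    by (simp add: sum_product)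
  also have "(\<Sum>i\<in>A. \<Sum>j\<in>A. (x j)^2 * (y i)^2) = (\<Sum>i\<in>A. (x i)^2) * (\<Sum>i\<in>A. (y i)^2)"
  proof -
    have "(\<Sum>i\<in>A. (y i)^2) * (\<Sum>i\<in>A. (x i)^2) = (\<Sum>i\<in>A. \<Sum>j\<in>A. (y i)^2 * (x j)^2)"
      by (rule sum_product)
    also have "\<dots> = (\<Sum>i\<in>A. \<Sum>j\<in>A. (x j)^2 * (y i)^2)" by (simp add: mult.commute)
    finally have "(\<Sum>i\<in>A. (y i)^2) * (\<Sum>i\<in>A. (x i)^2) = (\<Sum>i\<in>A. \<Sum>j\<in>A. (x j)^2 * (y i)^2)" .
    thus ?thesis by (simp add: mult.commute)
  qed
  also have "(\<Sum>i\<in>A. \<Sum>j\<in>A. (x i * y i) * (x j * y j)) = (\<Sum>i\<in>A. x i * y i)^2"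
    by (simp add: sum_product power2_eq_square)
  finally show ?thesis by simp
qed

locale blocks =
  fixes s :: "nat \<Rightarrow> nat" and p :: nat
  assumes s0: "s 0 = 0" and smono: "\<And>i. i < p \<Longrightarrow> s i < s (Suc i)"
begin

lemma s_less: "i < j \<Longrightarrow> j \<le> p \<Longrightarrow> s i < s j"
proof (induction j)
  case 0 thus ?case by simp
next
  case (Suc j)
  show ?case
  proof (cases "i = j")
    case True thus ?thesis using Suc smono by simp
  next
    case False
    hence "s i < s j" using Suc by simp
    also have "s j < s (Suc j)" using Suc smono by simp
    finally show ?thesis .
  qed
qed

lemma s_le: "i \<le> j \<Longrightarrow> j \<le> p \<Longrightarrow> s i \<le> s j"
  using s_less by (cases "i = j") (auto simp: le_less)

definition blk :: "nat \<Rightarrow> nat" where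
  "blk l = (THE k. k \<in> {1..p} \<and> s (k-1) \<le> l \<and> l < s k)"

definition off :: "nat \<Rightarrow> nat" where
  "off l = l - s (blk l - 1)"

definition bsz :: "nat \<Rightarrow> nat" where
  "bsz k = s k - s (k - 1)"

lemma blk_uniq:
  assumes "k \<in> {1..p}" "s (k-1) \<le> l" "l < s k" "k' \<in> {1..p}" "s (k'-1) \<le> l" "l < s k'"
  shows "k = k'"
proof (rule ccontr)
  assume "k \<noteq> k'"
  then consider "k < k'" | "k' < k" by linarith
  thus False
  proof cases
    case 1
    hence "s k \<le> s (k'-1)" using assms by (intro s_le) auto
    thus False using assms by linarith
  next
    case 2
    hence "s k' \<le> s (k-1)" using assms by (intro s_le) auto
    thus False using assms by linarith
  qed
qed

lemma blk_ex:
  assumes "l < s p"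
  shows "\<exists>k. k \<in> {1..p} \<and> s (k-1) \<le> l \<and> l < s k"
proof -
  define k where "k = (LEAST k. l < s k)"
  have lk: "l < s k" unfolding k_def by (rule LeastI[of _ p]) (use assms in auto)
  have kp: "k \<le> p" unfolding k_def by (rule Least_le) (use assms in auto)
  have k1: "k \<ge> 1" using lk s0 by (cases k) auto
  have "\<not> l < s (k-1)" using k1 unfolding k_def
    by (metis (mono_tags, lifting) diff_less k_def less_numeral_extra(1) not_less_Least order_less_le_trans)
  thus ?thesis using lk kp k1 by (intro exI[of _ k]) auto
qed

lemma blk:
  assumes "l < s p"
  shows "blk l \<in> {1..p}" "s (blk l - 1) \<le> l" "l < s (blk l)"
proof -
  obtain k where k: "k \<in> {1..p} \<and> s (k-1) \<le> l \<and> l < s k" using blk_ex[OF assms] by blast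
  have "blk l = k" unfolding blk_def
    by (rule the_equality) (use k blk_uniq in blast)+
  thus "blk l \<in> {1..p}" "s (blk l - 1) \<le> l" "l < s (blk l)" using k by auto
qed

lemma blk_eqI:
  assumes "k \<in> {1..p}" "s (k-1) \<le> l" "l < s k"
  shows "blk l = k"
proof -
  have "l < s p" using assms s_le[of k p] by auto
  thus ?thesis using blk[of l] blk_uniq assms by blast
qed

lemma blk_shift:
  assumes "k \<in> {1..p}" "x < bsz k"
  shows "blk (s (k-1) + x) = k" "off (s (k-1) + x) = x" "s (k-1) + x < s p"
proof -
  show b: "blk (s (k-1) + x) = k" using assms by (intro blk_eqI) (auto simp: bsz_def)
  show "off (s (k-1) + x) = x" unfolding off_def b by simp
  show "s (k-1) + x < s p" using assms s_le[of k p] by (auto simp: bsz_def)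
qed

lemma off_less:
  assumes "l < s p"
  shows "off l < bsz (blk l)" "s (blk l - 1) + off l = l"
  using blk[OF assms] by (auto simp: off_def bsz_def)

lemma blk_same_off:
  assumes "l < s p" "m < s p" "blk l = blk m" "off l = off m"
  shows "l = m"
  using off_less[OF assms(1)] off_less[OF assms(2)] assms by metis

lemma blkdiag_entry:
  assumes "i < s p" "j < s p"
  shows "blkdiag s p Us $$ (i,j) = (if blk i = blk j then Us (blk i) $$ (off i, off j) else 0)"
proof -
  have ex: "(\<exists>k\<in>{1..p}. s (k-1) \<le> i \<and> i < s k \<and> s (k-1) \<le> j \<and> j < s k) \<longleftrightarrow> blk i = blk j"
    using blk[OF assms(1)] blk[OF assms(2)] blk_uniq by metis
  show ?thesis unfolding blkdiag_def index_mat(1)[OF assms] prod.case ex Let_def blk_def[symmetric]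
    off_def[symmetric] by (auto simp: off_def)
qed

lemma sum_blk:
  assumes "k \<in> {1..p}"
  shows "(\<Sum>n<s p. if blk n = k then f n else 0) = (\<Sum>x<bsz k. f (s (k-1) + x))"
proof -
  have "(\<Sum>n<s p. if blk n = k then f n else 0) = (\<Sum>n\<in>{n. n < s p \<and> blk n = k}. f n)"
    by (simp add: sum.inter_filter[symmetric] Collect_conj_eq lessThan_def Int_commute)
  also have "{n. n < s p \<and> blk n = k} = (\<lambda>x. s (k-1) + x) ` {..<bsz k}"
  proof
    show "{n. n < s p \<and> blk n = k} \<subseteq> (\<lambda>x. s (k-1) + x) ` {..<bsz k}"
    proof
      fix n assume "n \<in> {n. n < s p \<and> blk n = k}"
      hence n: "n < s p" "blk n = k" by auto
      show "n \<in> (\<lambda>x. s (k-1) + x) ` {..<bsz k}"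
        using off_less[OF n(1)] n by (intro image_eqI[of _ _ "off n"]) auto
    qed
    show "(\<lambda>x. s (k-1) + x) ` {..<bsz k} \<subseteq> {n. n < s p \<and> blk n = k}"
      using blk_shift[OF assms] by auto
  qed
  also have "(\<Sum>n\<in>(\<lambda>x. s (k-1) + x) ` {..<bsz k}. f n) = (\<Sum>x<bsz k. f (s (k-1) + x))"
    by (rule sum.reindex_cong[of "\<lambda>x. s (k-1) + x"]) (auto simp: inj_on_def)
  finally show ?thesis .
qed


lemma sum_blk2:
  fixes X Y :: "nat \<Rightarrow> real"
  assumes "k \<in> {1..p}"
  shows "(\<Sum>n<s p. (if blk n = k then X (off n) else 0) * (if blk n = k then Y (off n) else 0)) = (\<Sum>x<bsz k. X x * Y x)"
proof -
  have "(\<Sum>n<s p. (if blk n = k then X (off n) else 0) * (if blk n = k then Y (off n) else 0))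
      = (\<Sum>n<s p. if blk n = k then X (off n) * Y (off n) else 0)" by (intro sum.cong refl) auto
  also have "\<dots> = (\<Sum>x<bsz k. X (off (s (k-1) + x)) * Y (off (s (k-1) + x)))" by (rule sum_blk[OF assms])
  also have "\<dots> = (\<Sum>x<bsz k. X x * Y x)" using blk_shift[OF assms] by (intro sum.cong refl) auto
  finally show ?thesis .
qed

lemma block_spectral:
  fixes S :: "real mat"
  assumes S: "S \<in> carrier_mat (s p) (s p)"
    and sym: "\<And>i j. i < s p \<Longrightarrow> j < s p \<Longrightarrow> S $$ (i,j) = S $$ (j,i)"
    and bd: "\<And>i j. i < s p \<Longrightarrow> j < s p \<Longrightarrow> blk i \<noteq> blk j \<Longrightarrow> S $$ (i,j) = 0"
  shows "\<exists>V lam. V \<in> carrier_mat (s p) (s p) \<and> transpose_mat V * V = 1\<^sub>m (s p) \<and>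
     S = V * mat_diag (s p) lam * transpose_mat V \<and> (\<forall>i<s p. \<forall>j<s p. blk i \<noteq> blk j \<longrightarrow> V $$ (i,j) = 0)"
proof -
  define Sb where "Sb k = mat (bsz k) (bsz k) (\<lambda>(x,y). S $$ (s (k-1) + x, s (k-1) + y))" for k
  define P where "P k V lam = (V \<in> carrier_mat (bsz k) (bsz k) \<and> transpose_mat V * V = 1\<^sub>m (bsz k) \<and>
      Sb k = V * mat_diag (bsz k) lam * transpose_mat V)" for k V lam
  have ex: "\<exists>V lam. P k V lam" if k: "k \<in> {1..p}" for k
    unfolding P_def
  proof (rule spectral_thm)
    show "Sb k \<in> carrier_mat (bsz k) (bsz k)" by (simp add: Sb_def)
    fix i j assume "i < bsz k" "j < bsz k"
    thus "Sb k $$ (i,j) = Sb k $$ (j,i)" using blk_shift[OF k] sym by (simp add: Sb_def)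
  qed
  define Vs where "Vs k = (SOME V. \<exists>lam. P k V lam)" for k
  define lams where "lams k = (SOME lam. P k (Vs k) lam)" for k
  have Pk: "P k (Vs k) (lams k)" if "k \<in> {1..p}" for k
    using someI_ex[OF ex[OF that]] someI_ex[of "P k (Vs k)"] unfolding Vs_def[symmetric] lams_def
    by blast
  define V where "V = blkdiag s p Vs"
  define lam where "lam l = lams (blk l) (off l)" for l
  have V: "V \<in> carrier_mat (s p) (s p)" by (simp add: V_def blkdiag_def)
  have Ve: "V $$ (i,j) = (if blk i = blk j then Vs (blk i) $$ (off i, off j) else 0)" if "i < s p" "j < s p" for i j
    using blkdiag_entry[OF that] by (simp add: V_def)
  have VV: "transpose_mat V * V = 1\<^sub>m (s p)"
  proof (rule eq_matI)
    fix i j assume "i < dim_row (1\<^sub>m (s p) :: real mat)" "j < dim_col (1\<^sub>m (s p) :: real mat)"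
    hence i: "i < s p" and j: "j < s p" by auto
    have "(transpose_mat V * V) $$ (i,j) = (\<Sum>n<s p. V $$ (n,i) * V $$ (n,j))"
      using mat_mult_entry[of "transpose_mat V" "s p" "s p" V "s p" i j] V i j by simp
    also have "\<dots> = (1\<^sub>m (s p) :: real mat) $$ (i,j)"
    proof (cases "blk i = blk j")
      case False
      hence "i \<noteq> j" by auto
      have "V $$ (n,i) * V $$ (n,j) = 0" if "n < s p" for n using Ve[OF that i] Ve[OF that j] False by auto
      hence "(\<Sum>n<s p. V $$ (n,i) * V $$ (n,j)) = 0" by (intro sum.neutral) simp
      thus ?thesis using \<open>i \<noteq> j\<close> i j by simp
    next
      case True
      define k where "k = blk i"
      have k: "k \<in> {1..p}" using blk[OF i] k_def by simp
      have "(\<Sum>n<s p. V $$ (n,i) * V $$ (n,j)) =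
          (\<Sum>n<s p. (if blk n = k then Vs k $$ (off n, off i) else 0) * (if blk n = k then Vs k $$ (off n, off j) else 0))"
        using True by (intro sum.cong refl) (auto simp: Ve i j k_def)
      also have "\<dots> = (\<Sum>x<bsz k. Vs k $$ (x, off i) * Vs k $$ (x, off j))" by (rule sum_blk2[OF k])
      also have "\<dots> = (transpose_mat (Vs k) * Vs k) $$ (off i, off j)"
        using Pk[OF k] off_less[OF i] off_less[OF j] True k_def
        by (subst mat_mult_entry[of _ "bsz k" "bsz k" _ "bsz k"]) (auto simp: P_def)
      also have "\<dots> = (if off i = off j then 1 else 0)"
        using Pk[OF k] off_less[OF i] off_less[OF j] True k_def by (simp add: P_def)
      also have "\<dots> = (1\<^sub>m (s p) :: real mat) $$ (i,j)"
        using blk_same_off[OF i j True] i j by auto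
      finally show ?thesis .
    qed
    finally show "(transpose_mat V * V) $$ (i,j) = (1\<^sub>m (s p) :: real mat) $$ (i,j)" .
  qed (use V in auto)
  have SV: "S = V * mat_diag (s p) lam * transpose_mat V"
  proof (rule eq_matI)
    fix i j assume "i < dim_row (V * mat_diag (s p) lam * transpose_mat V)" "j < dim_col (V * mat_diag (s p) lam * transpose_mat V)"
    hence i: "i < s p" and j: "j < s p" using V by auto
    have "(V * mat_diag (s p) lam * transpose_mat V) $$ (i,j) = (\<Sum>n<s p. V $$ (i,n) * lam n * V $$ (j,n))"
      by (rule mat_diag_conj_entry[OF V V i j])
    also have "\<dots> = S $$ (i,j)"
    proof (cases "blk i = blk j")
      case False
      have "V $$ (i,n) * lam n * V $$ (j,n) = 0" if "n < s p" for n using Ve[OF i that] Ve[OF j that] False by auto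
      hence "(\<Sum>n<s p. V $$ (i,n) * lam n * V $$ (j,n)) = 0" by (intro sum.neutral) simp
      thus ?thesis using bd[OF i j False] by simp
    next
      case True
      define k where "k = blk i"
      have k: "k \<in> {1..p}" using blk[OF i] k_def by simp
      have "(\<Sum>n<s p. V $$ (i,n) * lam n * V $$ (j,n)) =
          (\<Sum>n<s p. (if blk n = k then Vs k $$ (off i, off n) * lams k (off n) else 0) * (if blk n = k then Vs k $$ (off j, off n) else 0))"
        using True by (intro sum.cong refl) (auto simp: Ve i j k_def lam_def)
      also have "\<dots> = (\<Sum>x<bsz k. Vs k $$ (off i, x) * lams k x * Vs k $$ (off j, x))" by (rule sum_blk2[OF k])
      also have "\<dots> = (Vs k * mat_diag (bsz k) (lams k) * transpose_mat (Vs k)) $$ (off i, off j)"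
        using Pk[OF k] off_less[OF i] off_less[OF j] True k_def
        by (subst mat_diag_conj_entry[of _ "bsz k" "bsz k"]) (auto simp: P_def)
      also have "\<dots> = Sb k $$ (off i, off j)" using Pk[OF k] by (simp add: P_def)
      also have "\<dots> = S $$ (i,j)"
        using off_less[OF i] off_less[OF j] True k_def by (simp add: Sb_def)
      finally show ?thesis .
    qed
    finally show "S $$ (i,j) = (V * mat_diag (s p) lam * transpose_mat V) $$ (i,j)" by simp
  qed (use S V in auto)
  have "\<forall>i<s p. \<forall>j<s p. blk i \<noteq> blk j \<longrightarrow> V $$ (i,j) = 0" using Ve by auto
  thus ?thesis using V VV SV by blast
qed

end


lemma square_sum_expand:
  fixes f :: "'b \<Rightarrow> real"
  shows "(\<Sum>k\<in>A. f k)^2 = (\<Sum>k\<in>A. \<Sum>k'\<in>A. f k * f k')"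
  by (simp add: power2_eq_square sum_product)

lemma swap4:
  fixes f :: "'a \<Rightarrow> 'b \<Rightarrow> 'c \<Rightarrow> 'd \<Rightarrow> real"
  shows "(\<Sum>i\<in>I. \<Sum>j\<in>J. \<Sum>k\<in>K. \<Sum>k'\<in>L. f i j k k') = (\<Sum>k\<in>K. \<Sum>k'\<in>L. \<Sum>i\<in>I. \<Sum>j\<in>J. f i j k k')"
proof -
  have "(\<Sum>i\<in>I. \<Sum>j\<in>J. \<Sum>k\<in>K. \<Sum>k'\<in>L. f i j k k') = (\<Sum>i\<in>I. \<Sum>k\<in>K. \<Sum>j\<in>J. \<Sum>k'\<in>L. f i j k k')"
    by (intro sum.cong refl) (rule sum.swap[where A=J and B=K])
  also have "\<dots> = (\<Sum>i\<in>I. \<Sum>k\<in>K. \<Sum>k'\<in>L. \<Sum>j\<in>J. f i j k k')"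
    by (intro sum.cong refl) (rule sum.swap[where A=J and B=L])
  also have "\<dots> = (\<Sum>k\<in>K. \<Sum>i\<in>I. \<Sum>k'\<in>L. \<Sum>j\<in>J. f i j k k')"
    by (rule sum.swap[where A=I and B=K])
  also have "\<dots> = (\<Sum>k\<in>K. \<Sum>k'\<in>L. \<Sum>i\<in>I. \<Sum>j\<in>J. f i j k k')"
    by (intro sum.cong refl) (rule sum.swap[where A=I and B=L])
  finally show ?thesis .
qed

lemma sumsq_conj:
  fixes X Z :: "nat \<Rightarrow> nat \<Rightarrow> real" and c :: "nat \<Rightarrow> real"
  assumes orth: "\<And>k k'. k < n \<Longrightarrow> k' < n \<Longrightarrow> (\<Sum>i\<in>I. X i k * X i k') = (if k = k' then 1 else 0)"
  shows "(\<Sum>i\<in>I. \<Sum>j\<in>J. (\<Sum>k<n. X i k * c k * Z j k)^2) = (\<Sum>k<n. (c k)^2 * (\<Sum>j\<in>J. (Z j k)^2))"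
proof -
  have "(\<Sum>i\<in>I. \<Sum>j\<in>J. (\<Sum>k<n. X i k * c k * Z j k)^2)
      = (\<Sum>i\<in>I. \<Sum>j\<in>J. \<Sum>k<n. \<Sum>k'<n. (X i k * X i k') * (c k * c k' * (Z j k * Z j k')))"
    by (simp add: square_sum_expand algebra_simps)
  also have "\<dots> = (\<Sum>k<n. \<Sum>k'<n. \<Sum>i\<in>I. \<Sum>j\<in>J. (X i k * X i k') * (c k * c k' * (Z j k * Z j k')))"
    by (rule swap4)
  also have "\<dots> = (\<Sum>k<n. \<Sum>k'<n. if k = k' then c k * c k * (\<Sum>j\<in>J. Z j k * Z j k) else 0)"
  proof (intro sum.cong refl)
    fix k k' assume k: "k \<in> {..<n}" and k': "k' \<in> {..<n}"
    have "(\<Sum>i\<in>I. \<Sum>j\<in>J. (X i k * X i k') * (c k * c k' * (Z j k * Z j k')))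
        = (\<Sum>i\<in>I. X i k * X i k') * (\<Sum>j\<in>J. c k * c k' * (Z j k * Z j k'))"
      by (simp add: sum_product)
    also have "\<dots> = (if k = k' then c k * c k * (\<Sum>j\<in>J. Z j k * Z j k) else 0)"
      using k k' by (simp add: orth sum_distrib_left)
    finally show "(\<Sum>i\<in>I. \<Sum>j\<in>J. (X i k * X i k') * (c k * c k' * (Z j k * Z j k')))
        = (if k = k' then c k * c k * (\<Sum>j\<in>J. Z j k * Z j k) else 0)" .
  qed
  also have "\<dots> = (\<Sum>k<n. (c k)^2 * (\<Sum>j\<in>J. (Z j k)^2))"
    by (simp add: sum.delta power2_eq_square)
  finally show ?thesis .
qed

lemma fro_norm_sq:
  "(fro_norm M)^2 = (\<Sum>i<dim_row M. \<Sum>j<dim_col M. (M $$ (i,j))^2)"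
  unfolding fro_norm_def by (subst real_sqrt_pow2) (auto intro!: sum_nonneg)

lemma fro_norm_nonneg: "fro_norm M \<ge> 0"
  unfolding fro_norm_def by (auto intro!: sum_nonneg)

lemma fro_norm_diff_sq:
  assumes "A \<in> carrier_mat n m" "B \<in> carrier_mat n m"
  shows "(fro_norm (A - B))^2 = (\<Sum>i<n. \<Sum>j<m. (A $$ (i,j) - B $$ (i,j))^2)"
  using assms by (simp add: fro_norm_sq)


locale setting = blocks s p for s :: "nat \<Rightarrow> nat" and p :: nat +
  fixes d K r :: nat and a q :: "nat \<Rightarrow> real" and Q :: "real mat"
  assumes r1: "1 \<le> r" and rK: "r \<le> K" and Kd: "K \<le> d"
    and a_mono: "\<And>i. 1 \<le> i \<Longrightarrow> i < r \<Longrightarrow> a i \<ge> a (i+1)"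
    and a_pos: "a r > 0"
    and sp: "s p = r"
    and a_blocks: "\<And>i k. i \<in> {1..p} \<Longrightarrow> s (i-1) < k \<Longrightarrow> k \<le> s i \<Longrightarrow> a k = a (s i)"
    and a_strict: "\<And>i. 1 \<le> i \<Longrightarrow> i < p \<Longrightarrow> a (s i) > a (s (i+1))"
    and q_sign: "\<And>i. i \<in> {1..r} \<Longrightarrow> q i = 1 \<or> q i = -1"
    and Q_st: "Q \<in> stiefel d K"
begin

definition al :: "nat \<Rightarrow> real" where "al l = a (Suc l)"

lemma Q: "Q \<in> carrier_mat d K" using Q_st by (simp add: stiefel_def)

lemma Qorth: "l < K \<Longrightarrow> m < K \<Longrightarrow> (\<Sum>i<d. Q $$ (i,l) * Q $$ (i,m)) = (if l = m then 1 else 0)"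
proof -
  assume l: "l < K" and m: "m < K"
  have "transpose_mat Q * Q = 1\<^sub>m K" using Q_st by (simp add: stiefel_def)
  hence "(transpose_mat Q * Q) $$ (l,m) = (if l = m then 1 else 0)" using l m by simp
  moreover have "(transpose_mat Q * Q) $$ (l,m) = (\<Sum>i<d. Q $$ (i,l) * Q $$ (i,m))"
    using mat_mult_entry[of "transpose_mat Q" K d Q K l m] Q l m by simp
  ultimately show ?thesis by simp
qed

lemma a_ge_r: "1 \<le> i \<Longrightarrow> i \<le> r \<Longrightarrow> a i \<ge> a r"
proof (induction "r - i" arbitrary: i)
  case 0 thus ?case by simp
next
  case (Suc x)
  hence "a (i+1) \<ge> a r" by (intro Suc.hyps) auto
  moreover have "a i \<ge> a (i+1)" using Suc by (intro a_mono) auto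
  ultimately show ?case by linarith
qed

lemma al_ge: "l < r \<Longrightarrow> al l \<ge> a r"
  unfolding al_def using a_ge_r[of "Suc l"] by simp

lemma al_pos: "l < r \<Longrightarrow> al l > 0"
  using al_ge a_pos by fastforce

lemma al_blk: "l < r \<Longrightarrow> al l = a (s (blk l))"
  unfolding al_def using blk[of l] sp by (intro a_blocks) auto

lemma a_s_strict: "1 \<le> i \<Longrightarrow> i < j \<Longrightarrow> j \<le> p \<Longrightarrow> a (s i) > a (s j)"
proof (induction j)
  case 0 thus ?case by simp
next
  case (Suc j)
  show ?case
  proof (cases "i = j")
    case True thus ?thesis using Suc a_strict[of j] by simp
  next
    case False
    hence "a (s i) > a (s j)" using Suc by simp
    moreover have "a (s j) > a (s (Suc j))" using Suc a_strict[of j] False by simp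
    ultimately show ?thesis by linarith
  qed
qed

definition g :: "nat \<Rightarrow> real" where "g l = (\<Sum>i\<in>{r..<d}. (Q $$ (i,l))^2)"

lemma g_nonneg: "g l \<ge> 0" unfolding g_def by (intro sum_nonneg) auto

lemma col_split: "l < r \<Longrightarrow> (\<Sum>i<r. (Q $$ (i,l))^2) = 1 - g l"
proof -
  assume l: "l < r"
  have "(\<Sum>i<d. (Q $$ (i,l))^2) = 1" using Qorth[of l l] l rK by (simp add: power2_eq_square)
  moreover have "(\<Sum>i<d. (Q $$ (i,l))^2) = (\<Sum>i<r. (Q $$ (i,l))^2) + g l"
    unfolding g_def using sum.atLeastLessThan_concat[of 0 r d "\<lambda>i. (Q $$ (i,l))^2"] rK Kd by (simp add: lessThan_atLeast0)
  ultimately show ?thesis by simp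
qed

definition T1 where "T1 = (\<Sum>l<r. \<Sum>m<r. (Q $$ (l,m))^2 * (al l - al m)^2)"
definition T2 where "T2 = (\<Sum>l<r. \<Sum>m<r. al l * al m * (Q $$ (l,m) - Q $$ (m,l))^2)"
definition T3 where "T3 = (\<Sum>l<r. (al l)^2 * g l)"

definition Amat where "Amat = A_mat d K r a"

lemma Amat: "Amat \<in> carrier_mat d K" by (simp add: Amat_def A_mat_def)

lemma Amat_entry: "i < d \<Longrightarrow> j < K \<Longrightarrow> Amat $$ (i,j) = (if i = j \<and> i < r then al i else 0)"
  by (simp add: Amat_def A_mat_def al_def)

lemma QAQ_entry:
  assumes i: "i < d" and j: "j < K"
  shows "(Q * transpose_mat Amat * Q) $$ (i,j) = (\<Sum>l<r. Q $$ (i,l) * al l * Q $$ (l,j))"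
proof -
  have QA: "(Q * transpose_mat Amat) $$ (i,k) = (if k < r then Q $$ (i,k) * al k else 0)" if k: "k < d" for k
  proof -
    have "(Q * transpose_mat Amat) $$ (i,k) = (\<Sum>t<K. Q $$ (i,t) * Amat $$ (k,t))"
      using mat_mult_entry[of Q d K "transpose_mat Amat" d i k] Q Amat i k by simp
    also have "\<dots> = (\<Sum>t<K. if t = k then (if k < r then Q $$ (i,k) * al k else 0) else 0)"
      using k by (intro sum.cong refl) (auto simp: Amat_entry)
    also have "\<dots> = (if k < r then Q $$ (i,k) * al k else 0)" using k rK by (auto simp: sum.delta')
    finally show ?thesis .
  qed
  have "(Q * transpose_mat Amat * Q) $$ (i,j) = (\<Sum>k<d. (Q * transpose_mat Amat) $$ (i,k) * Q $$ (k,j))"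
    using mat_mult_entry[of "Q * transpose_mat Amat" d d Q K i j] Q Amat i j by simp
  also have "\<dots> = (\<Sum>k<d. if k < r then Q $$ (i,k) * al k * Q $$ (k,j) else 0)"
    by (intro sum.cong refl) (simp add: QA)
  also have "\<dots> = (\<Sum>k<r. Q $$ (i,k) * al k * Q $$ (k,j))"
    using rK Kd by (simp add: sum.inter_filter[symmetric]) (intro sum.cong, auto)
  finally show ?thesis .
qed


lemma T_identity:
  "T1 + T2 + T3 = (\<Sum>l<r. (al l)^2 * (\<Sum>m<r. (Q $$ (l,m))^2)) + (\<Sum>l<r. (al l)^2)
     - 2 * (\<Sum>l<r. \<Sum>m<r. al l * al m * (Q $$ (l,m) * Q $$ (m,l)))"
proof -
  define Y1 where "Y1 = (\<Sum>l<r. \<Sum>m<r. (Q $$ (l,m))^2 * (al l)^2)"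
  define Y2 where "Y2 = (\<Sum>l<r. \<Sum>m<r. (Q $$ (l,m))^2 * (al m)^2)"
  define Z where "Z = (\<Sum>l<r. \<Sum>m<r. al l * al m * (Q $$ (l,m))^2)"
  define Z' where "Z' = (\<Sum>l<r. \<Sum>m<r. al l * al m * (Q $$ (m,l))^2)"
  define X where "X = (\<Sum>l<r. \<Sum>m<r. al l * al m * (Q $$ (l,m) * Q $$ (m,l)))"
  have "T1 = (\<Sum>l<r. \<Sum>m<r. (Q $$ (l,m))^2 * (al l)^2 + (Q $$ (l,m))^2 * (al m)^2 - 2 * (al l * al m * (Q $$ (l,m))^2))"
    unfolding T1_def by (intro sum.cong refl) (simp add: power2_diff algebra_simps)
  also have "\<dots> = Y1 + Y2 - 2 * Z"
    unfolding Y1_def Y2_def Z_def by (simp add: sum.distrib sum_subtractf sum_distrib_left)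
  finally have t1: "T1 = Y1 + Y2 - 2 * Z" .
  have "T2 = (\<Sum>l<r. \<Sum>m<r. al l * al m * (Q $$ (l,m))^2 + al l * al m * (Q $$ (m,l))^2 - 2 * (al l * al m * (Q $$ (l,m) * Q $$ (m,l))))"
    unfolding T2_def by (intro sum.cong refl) (simp add: power2_diff algebra_simps)
  also have "\<dots> = Z + Z' - 2 * X"
    unfolding Z_def Z'_def X_def by (simp add: sum.distrib sum_subtractf sum_distrib_left)
  finally have t2: "T2 = Z + Z' - 2 * X" .
  have "Z' = (\<Sum>m<r. \<Sum>l<r. al l * al m * (Q $$ (m,l))^2)" unfolding Z'_def by (rule sum.swap)
  also have "\<dots> = Z" unfolding Z_def by (intro sum.cong refl) (simp add: mult.commute)
  finally have zz: "Z' = Z" .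
  have "Y2 = (\<Sum>m<r. \<Sum>l<r. (Q $$ (l,m))^2 * (al m)^2)" unfolding Y2_def by (rule sum.swap)
  also have "\<dots> = (\<Sum>m<r. (al m)^2 * (1 - g m))"
  proof (intro sum.cong refl)
    fix m assume m: "m \<in> {..<r}"
    have "(\<Sum>l<r. (Q $$ (l,m))^2 * (al m)^2) = (\<Sum>l<r. (Q $$ (l,m))^2) * (al m)^2"
      by (simp add: sum_distrib_right)
    thus "(\<Sum>l<r. (Q $$ (l,m))^2 * (al m)^2) = (al m)^2 * (1 - g m)" using col_split m by simp
  qed
  also have "\<dots> = (\<Sum>m<r. (al m)^2) - T3" unfolding T3_def by (simp add: algebra_simps sum_subtractf)
  finally have y2: "Y2 = (\<Sum>m<r. (al m)^2) - T3" .
  have y1: "Y1 = (\<Sum>l<r. (al l)^2 * (\<Sum>m<r. (Q $$ (l,m))^2))"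
    unfolding Y1_def by (simp add: sum_distrib_left mult.commute)
  show ?thesis using t1 t2 zz y2 y1 unfolding X_def by simp
qed

lemma R_bound: "T1 + T2 + T3 \<le> (fro_norm (R_res Amat Q))^2"
proof -
  define P where "P i j = (\<Sum>l<r. Q $$ (i,l) * al l * Q $$ (l,j))" for i j
  have QAQ: "Q * transpose_mat Amat * Q \<in> carrier_mat d K" using Q Amat by simp
  have "(fro_norm (R_res Amat Q))^2 = (\<Sum>i<d. \<Sum>j<K. (Amat $$ (i,j) - P i j)^2)"
    unfolding R_res_def using fro_norm_diff_sq[OF Amat QAQ] by (simp add: QAQ_entry P_def)
  also have "\<dots> = (\<Sum>i<d. \<Sum>j<K. (Amat $$ (i,j))^2) - 2 * (\<Sum>i<d. \<Sum>j<K. Amat $$ (i,j) * P i j)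
      + (\<Sum>i<d. \<Sum>j<K. (P i j)^2)"
    by (simp add: power2_diff sum.distrib sum_subtractf sum_distrib_left mult.assoc)
  also have "(\<Sum>i<d. \<Sum>j<K. (Amat $$ (i,j))^2) = (\<Sum>l<r. (al l)^2)"
  proof -
    have "(\<Sum>i<d. \<Sum>j<K. (Amat $$ (i,j))^2) = (\<Sum>i<d. if i < r then (al i)^2 else 0)"
    proof (intro sum.cong refl)
      fix i assume i: "i \<in> {..<d}"
      have "(\<Sum>j<K. (Amat $$ (i,j))^2) = (\<Sum>j<K. if j = i then (if i < r then (al i)^2 else 0) else 0)"
        using i by (intro sum.cong refl) (auto simp: Amat_entry)
      also have "\<dots> = (if i < r then (al i)^2 else 0)" using rK by (auto simp: sum.delta')
      finally show "(\<Sum>j<K. (Amat $$ (i,j))^2) = (if i < r then (al i)^2 else 0)" .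
    qed
    also have "\<dots> = (\<Sum>l<r. (al l)^2)" using rK Kd
      by (simp add: sum.inter_filter[symmetric]) (intro sum.cong, auto)
    finally show ?thesis .
  qed
  also have "(\<Sum>i<d. \<Sum>j<K. Amat $$ (i,j) * P i j) = (\<Sum>l<r. \<Sum>m<r. al l * al m * (Q $$ (l,m) * Q $$ (m,l)))"
  proof -
    have "(\<Sum>i<d. \<Sum>j<K. Amat $$ (i,j) * P i j) = (\<Sum>i<d. if i < r then al i * P i i else 0)"
    proof (intro sum.cong refl)
      fix i assume i: "i \<in> {..<d}"
      have "(\<Sum>j<K. Amat $$ (i,j) * P i j) = (\<Sum>j<K. if j = i then (if i < r then al i * P i i else 0) else 0)"
        using i by (intro sum.cong refl) (auto simp: Amat_entry)
      also have "\<dots> = (if i < r then al i * P i i else 0)" using rK by (auto simp: sum.delta')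
      finally show "(\<Sum>j<K. Amat $$ (i,j) * P i j) = (if i < r then al i * P i i else 0)" .
    qed
    also have "\<dots> = (\<Sum>l<r. al l * P l l)" using rK Kd
      by (simp add: sum.inter_filter[symmetric]) (intro sum.cong, auto)
    also have "\<dots> = (\<Sum>l<r. \<Sum>m<r. al l * al m * (Q $$ (l,m) * Q $$ (m,l)))"
      unfolding P_def by (intro sum.cong refl) (simp add: sum_distrib_left algebra_simps)
    finally show ?thesis .
  qed
  also have "(\<Sum>i<d. \<Sum>j<K. (P i j)^2) = (\<Sum>l<r. (al l)^2 * (\<Sum>j<K. (Q $$ (l,j))^2))"
    unfolding P_def
    by (rule sumsq_conj[where X="\<lambda>i l. Q $$ (i,l)" and Z="\<lambda>j l. Q $$ (l,j)"])
       (use Qorth rK in auto)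
  finally have R2: "(fro_norm (R_res Amat Q))^2 = (\<Sum>l<r. (al l)^2) - 2 * (\<Sum>l<r. \<Sum>m<r. al l * al m * (Q $$ (l,m) * Q $$ (m,l)))
      + (\<Sum>l<r. (al l)^2 * (\<Sum>j<K. (Q $$ (l,j))^2))" .
  have "(\<Sum>l<r. (al l)^2 * (\<Sum>m<r. (Q $$ (l,m))^2)) \<le> (\<Sum>l<r. (al l)^2 * (\<Sum>j<K. (Q $$ (l,j))^2))"
  proof (intro sum_mono mult_left_mono)
    show "(\<Sum>m<r. (Q $$ (l,m))^2) \<le> (\<Sum>j<K. (Q $$ (l,j))^2)" for l
      using rK by (intro sum_mono2) auto
  qed auto
  thus ?thesis using R2 T_identity by linarith
qed

end


lemma sgn_bound:
  fixes x :: real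
  assumes "x^2 \<le> 1"
  shows "(x - (if x \<ge> 0 then 1 else -1))^2 \<le> 1 - x^2"
proof -
  have "\<bar>x\<bar> \<le> 1" using assms by (metis abs_le_square_iff abs_one one_power2)
  show ?thesis
  proof (cases "x \<ge> 0")
    case True
    have "x * x \<le> x" using True \<open>\<bar>x\<bar> \<le> 1\<close> by (intro mult_right_le_one_le) auto
    thus ?thesis using True by (simp add: power2_eq_square algebra_simps)
  next
    case False
    have "x * (1 + x) \<le> 0" using False \<open>\<bar>x\<bar> \<le> 1\<close> by (intro mult_nonpos_nonneg) auto
    thus ?thesis using False by (simp add: power2_eq_square algebra_simps)
  qed
qed

lemma sum_swap_sym:
  fixes f :: "nat \<Rightarrow> nat \<Rightarrow> real"
  shows "(\<Sum>l<n. \<Sum>m<n. f l m) = (\<Sum>l<n. \<Sum>m<n. (f l m + f m l) / 2)"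
proof -
  have "(\<Sum>l<n. \<Sum>m<n. f m l) = (\<Sum>l<n. \<Sum>m<n. f l m)" by (rule sum.swap)
  thus ?thesis by (simp add: sum.distrib sum_divide_distrib[symmetric] add_divide_distrib)
qed

context setting
begin

definition Bm :: "real mat" where "Bm = upper_left r Q"

lemma Bm: "Bm \<in> carrier_mat r r" by (simp add: Bm_def upper_left_def)

lemma Bm_entry: "l < r \<Longrightarrow> m < r \<Longrightarrow> Bm $$ (l,m) = Q $$ (l,m)"
  by (simp add: Bm_def upper_left_def)

definition Ssym :: "real mat" where
  "Ssym = mat r r (\<lambda>(l,m). if blk l = blk m then (Q $$ (l,m) + Q $$ (m,l)) / 2 else 0)"

lemma Ssym: "Ssym \<in> carrier_mat r r" by (simp add: Ssym_def)

definition offs where "offs = (\<Sum>l<r. \<Sum>m<r. if blk l = blk m then 0 else (Q $$ (l,m))^2)"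
definition ksq where "ksq = (\<Sum>l<r. \<Sum>m<r. if blk l = blk m then ((Q $$ (l,m) - Q $$ (m,l)) / 2)^2 else 0)"
definition csq where "csq = (\<Sum>l<r. g l)"

lemma Bnorm: "(\<Sum>l<r. \<Sum>m<r. (Q $$ (l,m))^2) = r - csq"
proof -
  have "(\<Sum>l<r. \<Sum>m<r. (Q $$ (l,m))^2) = (\<Sum>m<r. \<Sum>l<r. (Q $$ (l,m))^2)" by (rule sum.swap)
  also have "\<dots> = (\<Sum>m<r. 1 - g m)" by (intro sum.cong refl) (simp add: col_split)
  also have "\<dots> = r - csq" by (simp add: csq_def sum_subtractf)
  finally show ?thesis .
qed

lemma spec_exists:
  "\<exists>V lam. V \<in> carrier_mat r r \<and> transpose_mat V * V = 1\<^sub>m r \<and>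
     Ssym = V * mat_diag r lam * transpose_mat V \<and> (\<forall>i<r. \<forall>j<r. blk i \<noteq> blk j \<longrightarrow> V $$ (i,j) = 0)"
  using block_spectral[of Ssym] Ssym unfolding sp by (auto simp: Ssym_def)

end


lemma mult_transpose_entry:
  assumes "V \<in> carrier_mat n m" "M \<in> carrier_mat n k" "i < m" "j < k"
  shows "(transpose_mat V * M) $$ (i,j) = (\<Sum>t<n. V $$ (t,i) * M $$ (t,j))"
  using assms by (subst mat_mult_entry[of _ m n _ k]) auto

locale wsetting = setting +
  fixes V :: "real mat" and lam :: "nat \<Rightarrow> real"
  assumes V: "V \<in> carrier_mat r r" and VV: "transpose_mat V * V = 1\<^sub>m r"
    and SV: "Ssym = V * mat_diag r lam * transpose_mat V"
    and Vbd: "\<And>i j. i < r \<Longrightarrow> j < r \<Longrightarrow> blk i \<noteq> blk j \<Longrightarrow> V $$ (i,j) = 0"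
begin

definition sg :: "nat \<Rightarrow> real" where "sg k = (if lam k \<ge> 0 then 1 else -1)"
definition W :: "real mat" where "W = V * mat_diag r sg * transpose_mat V"

lemma W: "W \<in> carrier_mat r r" unfolding W_def
  by (rule mult_carrier_mat[OF mult_carrier_mat[OF V mat_diag_dim]]) (use V in simp)

lemma W_entry: "l < r \<Longrightarrow> m < r \<Longrightarrow> W $$ (l,m) = (\<Sum>k<r. V $$ (l,k) * sg k * V $$ (m,k))"
  unfolding W_def by (rule mat_diag_conj_entry[OF V V])

lemma W_sym: "l < r \<Longrightarrow> m < r \<Longrightarrow> W $$ (l,m) = W $$ (m,l)"
  by (simp add: W_entry mult.commute mult.left_commute)

lemma V_prod_zero: "l < r \<Longrightarrow> m < r \<Longrightarrow> k < r \<Longrightarrow> blk l \<noteq> blk m \<Longrightarrow> V $$ (l,k) * V $$ (m,k) = 0"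
  by (metis Vbd mult_zero_left mult_zero_right)

lemma W_bd: "l < r \<Longrightarrow> m < r \<Longrightarrow> blk l \<noteq> blk m \<Longrightarrow> W $$ (l,m) = 0"
proof -
  assume lm: "l < r" "m < r" "blk l \<noteq> blk m"
  have "V $$ (l,k) * sg k * V $$ (m,k) = 0" if "k < r" for k
    using V_prod_zero[OF lm(1,2) that lm(3)] by (simp add: mult.commute mult.left_commute)
  hence "(\<Sum>k<r. V $$ (l,k) * sg k * V $$ (m,k)) = 0" by (intro sum.neutral) simp
  thus ?thesis using lm by (simp add: W_entry)
qed

lemma Ssym_entry: "l < r \<Longrightarrow> m < r \<Longrightarrow> Ssym $$ (l,m) = (\<Sum>k<r. V $$ (l,k) * lam k * V $$ (m,k))"
  using SV mat_diag_conj_entry[OF V V] by metis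

lemma Ssym_def_entry: "l < r \<Longrightarrow> m < r \<Longrightarrow> Ssym $$ (l,m) = (if blk l = blk m then (Q $$ (l,m) + Q $$ (m,l)) / 2 else 0)"
  by (simp add: Ssym_def)

lemma Vcol: "k < r \<Longrightarrow> k' < r \<Longrightarrow> (\<Sum>i<r. V $$ (i,k) * V $$ (i,k')) = (if k = k' then 1 else 0)"
proof -
  assume k: "k < r" "k' < r"
  have "(transpose_mat V * V) $$ (k,k') = (\<Sum>i<r. V $$ (i,k) * V $$ (i,k'))"
    using mat_mult_entry[of "transpose_mat V" r r V r k k'] V k by simp
  thus ?thesis using VV k by simp
qed

lemma Vcol1: "k < r \<Longrightarrow> (\<Sum>i<r. (V $$ (i,k))^2) = 1"
  using Vcol[of k k] by (simp add: power2_eq_square)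

lemma sum_SW: "(\<Sum>l<r. \<Sum>m<r. (Ssym $$ (l,m) - W $$ (l,m))^2) = (\<Sum>k<r. (lam k - sg k)^2)"
proof -
  have "(\<Sum>l<r. \<Sum>m<r. (Ssym $$ (l,m) - W $$ (l,m))^2) = (\<Sum>l<r. \<Sum>m<r. (\<Sum>k<r. V $$ (l,k) * (lam k - sg k) * V $$ (m,k))^2)"
    by (intro sum.cong refl) (simp add: Ssym_entry W_entry sum_subtractf[symmetric] right_diff_distrib left_diff_distrib)
  also have "\<dots> = (\<Sum>k<r. (lam k - sg k)^2 * (\<Sum>m<r. (V $$ (m,k))^2))"
    by (rule sumsq_conj) (rule Vcol)
  also have "\<dots> = (\<Sum>k<r. (lam k - sg k)^2)" by (simp add: Vcol1)
  finally show ?thesis .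
qed

lemma sum_S: "(\<Sum>l<r. \<Sum>m<r. (Ssym $$ (l,m))^2) = (\<Sum>k<r. (lam k)^2)"
proof -
  have "(\<Sum>l<r. \<Sum>m<r. (Ssym $$ (l,m))^2) = (\<Sum>l<r. \<Sum>m<r. (\<Sum>k<r. V $$ (l,k) * lam k * V $$ (m,k))^2)"
    by (intro sum.cong refl) (simp add: Ssym_entry)
  also have "\<dots> = (\<Sum>k<r. (lam k)^2 * (\<Sum>m<r. (V $$ (m,k))^2))"
    by (rule sumsq_conj) (rule Vcol)
  also have "\<dots> = (\<Sum>k<r. (lam k)^2)" by (simp add: Vcol1)
  finally show ?thesis .
qed

lemma lam_eq: "k < r \<Longrightarrow> lam k = (\<Sum>a<r. V $$ (a,k) * (\<Sum>b<r. Q $$ (a,b) * V $$ (b,k)))"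
proof -
  assume k: "k < r"
  have VT: "transpose_mat V \<in> carrier_mat r r" using V by simp
  have D: "mat_diag r lam \<in> carrier_mat r r" by simp
  have "transpose_mat V * Ssym * V = (transpose_mat V * V) * mat_diag r lam * (transpose_mat V * V)"
    unfolding SV by (rule assoc5[OF VT V D VT V])
  also have "\<dots> = mat_diag r lam" using VV by (simp add: left_mult_one_mat[OF D] right_mult_one_mat[OF D])
  finally have e: "transpose_mat V * Ssym * V = mat_diag r lam" .
  have "(transpose_mat V * Ssym * V) $$ (k,k) = (\<Sum>b<r. (transpose_mat V * Ssym) $$ (k,b) * V $$ (b,k))"
    using mat_mult_entry[of "transpose_mat V * Ssym" r r V r k k] V Ssym k by simp
  also have "\<dots> = (\<Sum>b<r. (\<Sum>a<r. V $$ (a,k) * Ssym $$ (a,b)) * V $$ (b,k))"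
    using k by (intro sum.cong refl) (simp add: mult_transpose_entry[OF V Ssym])
  also have "\<dots> = (\<Sum>b<r. \<Sum>a<r. V $$ (a,k) * V $$ (b,k) * Ssym $$ (a,b))"
    by (intro sum.cong refl) (simp add: sum_distrib_right sum_distrib_left mult.commute mult.left_commute)
  also have "\<dots> = (\<Sum>a<r. \<Sum>b<r. V $$ (a,k) * V $$ (b,k) * Ssym $$ (a,b))"
    by (rule sum.swap)
  also have "\<dots> = (\<Sum>a<r. \<Sum>b<r. V $$ (a,k) * V $$ (b,k) * ((Q $$ (a,b) + Q $$ (b,a)) / 2))"
  proof (intro sum.cong refl)
    fix a b assume a: "a \<in> {..<r}" and b: "b \<in> {..<r}"
    show "V $$ (a,k) * V $$ (b,k) * Ssym $$ (a,b) = V $$ (a,k) * V $$ (b,k) * ((Q $$ (a,b) + Q $$ (b,a)) / 2)"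
      using V_prod_zero[of a b k] a b k by (cases "blk a = blk b") (auto simp: Ssym_def_entry)
  qed
  also have "\<dots> = (\<Sum>a<r. \<Sum>b<r. V $$ (a,k) * V $$ (b,k) * Q $$ (a,b))"
    by (subst sum_swap_sym[of "\<lambda>a b. V $$ (a,k) * V $$ (b,k) * Q $$ (a,b)"]) (simp add: algebra_simps add_divide_distrib)
  also have "\<dots> = (\<Sum>a<r. V $$ (a,k) * (\<Sum>b<r. Q $$ (a,b) * V $$ (b,k)))"
    by (simp add: sum_distrib_left algebra_simps)
  finally show ?thesis using e k by (simp add: mat_diag_def)
qed

lemma lam_bound: "k < r \<Longrightarrow> (lam k)^2 \<le> 1"
proof -
  assume k: "k < r"
  define u where "u a = (\<Sum>b<r. Q $$ (a,b) * V $$ (b,k))" for a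
  have "(lam k)^2 \<le> (\<Sum>a<r. (V $$ (a,k))^2) * (\<Sum>a<r. (u a)^2)"
    unfolding lam_eq[OF k] u_def[symmetric] by (rule cs_sum) simp
  also have "\<dots> = (\<Sum>a<r. (u a)^2)" using Vcol1[OF k] by simp
  also have "\<dots> \<le> (\<Sum>a<d. (u a)^2)" using rK Kd by (intro sum_mono2) auto
  also have "\<dots> = (\<Sum>a<d. \<Sum>j\<in>{0::nat}. (\<Sum>b<r. Q $$ (a,b) * V $$ (b,k) * 1)^2)" by (simp add: u_def)
  also have "\<dots> = (\<Sum>b<r. (V $$ (b,k))^2 * (\<Sum>j\<in>{0::nat}. 1^2))"
    by (rule sumsq_conj[where X="\<lambda>a b. Q $$ (a,b)"]) (use Qorth rK in auto)
  also have "\<dots> = 1" using Vcol1[OF k] by simp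
  finally show ?thesis .
qed


lemma main_bound: "(fro_norm (Bm - W))^2 \<le> 2 * offs + 2 * ksq + csq"
proof -
  define S where "S l m = (Q $$ (l,m) + Q $$ (m,l)) / 2" for l m
  define Kk where "Kk l m = (Q $$ (l,m) - Q $$ (m,l)) / 2" for l m
  have "(fro_norm (Bm - W))^2 = (\<Sum>l<r. \<Sum>m<r. (Bm $$ (l,m) - W $$ (l,m))^2)"
    by (rule fro_norm_diff_sq[OF Bm W])
  also have "\<dots> = (\<Sum>l<r. \<Sum>m<r. (if blk l = blk m then (Q $$ (l,m) - W $$ (l,m))^2 else 0)) + offs"
    unfolding offs_def sum.distrib[symmetric]
    by (intro sum.cong refl) (auto simp: Bm_entry W_bd)
  also have "(\<Sum>l<r. \<Sum>m<r. (if blk l = blk m then (Q $$ (l,m) - W $$ (l,m))^2 else 0))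
      = (\<Sum>l<r. \<Sum>m<r. (if blk l = blk m then (S l m - W $$ (l,m))^2 + (Kk l m)^2 else 0))"
    apply (subst sum_swap_sym)
    apply (intro sum.cong refl)
    apply (auto simp: S_def Kk_def W_sym[of _ ] power2_eq_square field_simps)
    done
  also have "\<dots> = (\<Sum>l<r. \<Sum>m<r. (Ssym $$ (l,m) - W $$ (l,m))^2) + ksq"
    unfolding ksq_def sum.distrib[symmetric]
    by (intro sum.cong refl) (auto simp: Ssym_def_entry W_bd S_def Kk_def)
  also have "(\<Sum>l<r. \<Sum>m<r. (Ssym $$ (l,m) - W $$ (l,m))^2) = (\<Sum>k<r. (lam k - sg k)^2)"
    by (rule sum_SW)
  also have "\<dots> \<le> (\<Sum>k<r. 1 - (lam k)^2)"
    by (intro sum_mono) (simp add: sg_def sgn_bound lam_bound)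
  also have "\<dots> = r - (\<Sum>l<r. \<Sum>m<r. (Ssym $$ (l,m))^2)" by (simp add: sum_subtractf sum_S)
  also have "(\<Sum>l<r. \<Sum>m<r. (Ssym $$ (l,m))^2) = (\<Sum>l<r. \<Sum>m<r. if blk l = blk m then (S l m)^2 else 0)"
    by (intro sum.cong refl) (simp add: Ssym_def_entry S_def)
  also have "(\<Sum>l<r. \<Sum>m<r. if blk l = blk m then (S l m)^2 else 0) = r - csq - offs - ksq"
  proof -
    have "r - csq = (\<Sum>l<r. \<Sum>m<r. (Q $$ (l,m))^2)" using Bnorm by simp
    also have "\<dots> = (\<Sum>l<r. \<Sum>m<r. (if blk l = blk m then (Q $$ (l,m))^2 else 0)) + offs"
      unfolding offs_def sum.distrib[symmetric] by (intro sum.cong refl) auto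
    also have "(\<Sum>l<r. \<Sum>m<r. (if blk l = blk m then (Q $$ (l,m))^2 else 0))
        = (\<Sum>l<r. \<Sum>m<r. (if blk l = blk m then (S l m)^2 + (Kk l m)^2 else 0))"
      apply (subst sum_swap_sym)
      apply (intro sum.cong refl)
      apply (auto simp: S_def Kk_def power2_eq_square field_simps)
      done
    also have "\<dots> = (\<Sum>l<r. \<Sum>m<r. if blk l = blk m then (S l m)^2 else 0) + ksq"
      unfolding ksq_def sum.distrib[symmetric] by (intro sum.cong refl) (auto simp: Kk_def)
    finally show ?thesis by simp
  qed
  finally show ?thesis by simp
qed

end


lemma pair_delta:
  fixes x y c :: real
  assumes c: "c > 0" and x: "x \<ge> c" and y: "y \<ge> c"
  shows "c^2 * (x / y - y / x)^2 \<le> 4 * (x - y)^2"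
proof -
  have xp: "x > 0" and yp: "y > 0" using c x y by auto
  have xy: "x * x - y * y = (x - y) * (x + y)" by (simp add: algebra_simps)
  have "x / y - y / x = (x * x - y * y) / (x * y)" using xp yp by (simp add: field_simps)
  hence e: "x / y - y / x = (x - y) * (x + y) / (x * y)" by (simp only: xy)
  have "c * (x + y) \<le> 2 * (x * y)"
  proof -
    have "c * x \<le> y * x" using y xp by (intro mult_right_mono) auto
    moreover have "c * y \<le> x * y" using x yp by (intro mult_right_mono) auto
    ultimately show ?thesis by (simp add: algebra_simps)
  qed
  hence "(c * (x + y))^2 \<le> (2 * (x * y))^2" using c xp yp by (intro power_mono) auto
  hence "c^2 * (x + y)^2 \<le> 4 * (x * y)^2" by (simp add: power_mult_distrib)
  hence "c^2 * (x + y)^2 / (x * y)^2 \<le> 4" using xp yp by (simp add: field_simps)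
  hence "(x - y)^2 * (c^2 * (x + y)^2 / (x * y)^2) \<le> (x - y)^2 * 4" by (intro mult_left_mono) auto
  moreover have "c^2 * (x / y - y / x)^2 = (x - y)^2 * (c^2 * (x + y)^2 / (x * y)^2)"
    unfolding e by (simp add: power_mult_distrib power_divide mult_ac)
  ultimately show ?thesis by simp
qed

context setting
begin

lemma T_nonneg: "T1 \<ge> 0" "T2 \<ge> 0" "T3 \<ge> 0"
  unfolding T1_def T2_def T3_def using al_pos
  by (auto intro!: sum_nonneg mult_nonneg_nonneg g_nonneg simp: less_imp_le)

lemma csq_bound: "(a r)^2 * csq \<le> T3"
proof -
  have "(a r)^2 * csq = (\<Sum>l<r. (a r)^2 * g l)" by (simp add: csq_def sum_distrib_left)
  also have "\<dots> \<le> T3" unfolding T3_def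
  proof (intro sum_mono mult_right_mono g_nonneg)
    fix l assume "l \<in> {..<r}"
    thus "(a r)^2 \<le> (al l)^2" using al_ge[of l] a_pos by (intro power_mono) auto
  qed
  finally show ?thesis .
qed

lemma ksq_bound: "4 * (a r)^2 * ksq \<le> T2"
proof -
  have "4 * (a r)^2 * ksq = (\<Sum>l<r. \<Sum>m<r. if blk l = blk m then (a r)^2 * (Q $$ (l,m) - Q $$ (m,l))^2 else 0)"
    unfolding ksq_def by (simp add: sum_distrib_left) (intro sum.cong refl, auto simp: power_divide)
  also have "\<dots> \<le> T2" unfolding T2_def
  proof (intro sum_mono)
    fix l m assume l: "l \<in> {..<r}" and m: "m \<in> {..<r}"
    have "(a r)^2 = a r * a r" by (simp add: power2_eq_square)
    also have "\<dots> \<le> al l * al m" using al_ge[of l] al_ge[of m] l m a_pos by (intro mult_mono) auto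
    finally have "(a r)^2 * (Q $$ (l,m) - Q $$ (m,l))^2 \<le> al l * al m * (Q $$ (l,m) - Q $$ (m,l))^2"
      by (intro mult_right_mono) auto
    moreover have "0 \<le> al l * al m * (Q $$ (l,m) - Q $$ (m,l))^2" using al_pos l m by (intro mult_nonneg_nonneg) (auto simp: less_imp_le)
    ultimately show "(if blk l = blk m then (a r)^2 * (Q $$ (l,m) - Q $$ (m,l))^2 else 0) \<le> al l * al m * (Q $$ (l,m) - Q $$ (m,l))^2"
      by auto
  qed
  finally show ?thesis .
qed

lemma a_s_pos: "i \<in> {1..p} \<Longrightarrow> a (s i) \<ge> a r"
proof -
  assume i: "i \<in> {1..p}"
  have "s i > s 0" using i by (intro s_less) auto
  moreover have "s i \<le> s p" using i by (intro s_le) auto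
  ultimately show ?thesis using s0 sp by (intro a_ge_r) auto
qed

definition DS where "DS = {(delta a s i j)\<^sup>2 | i j. i \<in> {1..p} \<and> j \<in> {1..p} \<and> i \<noteq> j}"

lemma DS_finite: "finite DS"
proof -
  have "DS \<subseteq> (\<lambda>(i,j). (delta a s i j)\<^sup>2) ` ({1..p} \<times> {1..p})" unfolding DS_def by auto
  thus ?thesis by (rule finite_subset) auto
qed

lemma DS_pos: "x \<in> DS \<Longrightarrow> x > 0"
proof -
  assume "x \<in> DS"
  then obtain i j where ij: "i \<in> {1..p}" "j \<in> {1..p}" "i \<noteq> j" "x = (delta a s i j)\<^sup>2" unfolding DS_def by auto
  have xi: "a (s i) > 0" and xj: "a (s j) > 0" using a_s_pos[OF ij(1)] a_s_pos[OF ij(2)] a_pos by auto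
  have "a (s i) \<noteq> a (s j)" using ij a_s_strict[of i j] a_s_strict[of j i] by (cases "i < j") auto
  hence "(a (s i))^2 \<noteq> (a (s j))^2" using xi xj by (simp add: power2_eq_iff_nonneg)
  hence "a (s i) * a (s i) \<noteq> a (s j) * a (s j)" by (simp add: power2_eq_square)
  hence "delta a s i j \<noteq> 0" using xi xj unfolding delta_def by (simp add: field_simps)
  thus ?thesis using ij by simp
qed

lemma offs_bound: "(a r)^2 * offs \<le> 4 * inv_min_delta_sq a s p * T1"
proof (cases "p \<le> 1")
  case True
  have "offs = 0" unfolding offs_def
  proof (intro sum.neutral ballI)
    fix l m assume l: "l \<in> {..<r}" and m: "m \<in> {..<r}"
    have "blk l = 1" "blk m = 1" using blk[of l] blk[of m] l m sp True by auto
    thus "(if blk l = blk m then 0 else (Q $$ (l,m))^2) = 0" by simp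
  qed
  thus ?thesis unfolding inv_min_delta_sq_def using True by simp
next
  case False
  define M where "M = Min DS"
  have ne: "DS \<noteq> {}"
  proof -
    have "(delta a s 1 2)\<^sup>2 \<in> DS" unfolding DS_def using False
      by (intro CollectI exI[of _ "1::nat"] exI[of _ "2::nat"]) auto
    thus ?thesis by auto
  qed
  have M: "M > 0" unfolding M_def using DS_finite ne DS_pos by auto
  have inv: "inv_min_delta_sq a s p = 1 / M" unfolding inv_min_delta_sq_def M_def DS_def using False by simp
  have "(a r)^2 * M / 4 * offs = (\<Sum>l<r. \<Sum>m<r. if blk l = blk m then 0 else (a r)^2 * M / 4 * (Q $$ (l,m))^2)"
    unfolding offs_def by (simp add: sum_distrib_left) (intro sum.cong refl, auto)
  also have "\<dots> \<le> T1" unfolding T1_def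
  proof (intro sum_mono)
    fix l m assume l: "l \<in> {..<r}" and m: "m \<in> {..<r}"
    show "(if blk l = blk m then 0 else (a r)^2 * M / 4 * (Q $$ (l,m))^2) \<le> (Q $$ (l,m))^2 * (al l - al m)^2"
    proof (cases "blk l = blk m")
      case True thus ?thesis by simp
    next
      case ne: False
      have bl: "blk l \<in> {1..p}" and bm: "blk m \<in> {1..p}" using blk[of l] blk[of m] l m sp by auto
      have "M \<le> (delta a s (blk l) (blk m))^2" unfolding M_def using DS_finite bl bm ne
        by (intro Min_le) (auto simp: DS_def)
      also have "(a r)^2 * \<dots> \<le> 4 * (al l - al m)^2"
      proof -
        have "al l = a (s (blk l))" "al m = a (s (blk m))" using l m al_blk by auto
        thus ?thesis unfolding delta_def using a_pos a_s_pos[OF bl] a_s_pos[OF bm]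
          by (simp only:) (intro pair_delta, auto)
      qed
      finally have "(a r)^2 * M \<le> 4 * (al l - al m)^2" using a_pos by (simp add: mult_left_mono)
      hence "(a r)^2 * M / 4 * (Q $$ (l,m))^2 \<le> (al l - al m)^2 * (Q $$ (l,m))^2"
        by (intro mult_right_mono) auto
      thus ?thesis using ne by (simp add: mult.commute)
    qed
  qed
  finally have "(a r)^2 * M / 4 * offs \<le> T1" .
  hence "(a r)^2 * offs \<le> 4 * T1 / M" using M by (simp add: field_simps)
  thus ?thesis using inv by simp
qed

lemma inv_nonneg: "inv_min_delta_sq a s p \<ge> 0"
proof (cases "p \<le> 1")
  case True thus ?thesis unfolding inv_min_delta_sq_def by simp
next
  case False
  have ne: "DS \<noteq> {}"
  proof -
    have "(delta a s 1 2)\<^sup>2 \<in> DS" unfolding DS_def using False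
      by (intro CollectI exI[of _ "1::nat"] exI[of _ "2::nat"]) auto
    thus ?thesis by auto
  qed
  have "Min DS > 0" using DS_finite ne DS_pos by auto
  thus ?thesis unfolding inv_min_delta_sq_def DS_def using False by simp
qed

lemma final_const:
  "2 * offs + 2 * ksq + csq \<le> 1 / (a r)^2 * (10 + 6 * (6 * real p - 5) * inv_min_delta_sq a s p)
            * (fro_norm (R_res (A_mat d K r a) Q))^2"
proof -
  define iv where "iv = inv_min_delta_sq a s p"
  have iv: "iv \<ge> 0" using inv_nonneg by (simp add: iv_def)
  have ar: "(a r)^2 > 0" using a_pos by simp
  have "(a r)^2 * (2 * offs + 2 * ksq + csq) = 2 * ((a r)^2 * offs) + (4 * (a r)^2 * ksq) / 2 + (a r)^2 * csq"
    by (simp add: algebra_simps)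
  also have "\<dots> \<le> 2 * (4 * iv * T1) + T2 / 2 + T3"
    using offs_bound ksq_bound csq_bound unfolding iv_def by linarith
  also have "\<dots> \<le> (1 + 8 * iv) * (T1 + T2 + T3)"
    using T_nonneg iv by (simp add: algebra_simps)
  also have "\<dots> \<le> (1 + 8 * iv) * (fro_norm (R_res (A_mat d K r a) Q))^2"
    using R_bound iv unfolding Amat_def by (intro mult_left_mono) auto
  also have "\<dots> \<le> (10 + 6 * (6 * real p - 5) * iv) * (fro_norm (R_res (A_mat d K r a) Q))^2"
  proof (intro mult_right_mono)
    show "1 + 8 * iv \<le> 10 + 6 * (6 * real p - 5) * iv"
    proof (cases "p \<le> 1")
      case True thus ?thesis unfolding iv_def inv_min_delta_sq_def by simp
    next
      case False
      hence "6 * (6 * real p - 5) \<ge> 8" by simp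
      hence "8 * iv \<le> 6 * (6 * real p - 5) * iv" using iv by (intro mult_right_mono) auto
      thus ?thesis by simp
    qed
  qed simp
  finally have "(a r)^2 * (2 * offs + 2 * ksq + csq) \<le> (10 + 6 * (6 * real p - 5) * iv) * (fro_norm (R_res (A_mat d K r a) Q))^2" .
  hence "2 * offs + 2 * ksq + csq \<le> (10 + 6 * (6 * real p - 5) * iv) * (fro_norm (R_res (A_mat d K r a) Q))^2 / (a r)^2"
    using ar by (simp add: pos_le_divide_eq mult.commute)
  thus ?thesis unfolding iv_def by simp
qed

end


context blocks
begin

lemma blkdiag_orth:
  fixes Us :: "nat \<Rightarrow> real mat"
  assumes Us: "\<And>k. k \<in> {1..p} \<Longrightarrow> Us k \<in> orth_mats (bsz k)"
  defines "U \<equiv> blkdiag s p Us"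
  shows "U \<in> carrier_mat (s p) (s p)" "transpose_mat U * U = 1\<^sub>m (s p)"
    "\<And>i j. i < s p \<Longrightarrow> j < s p \<Longrightarrow> blk i \<noteq> blk j \<Longrightarrow> U $$ (i,j) = 0"
proof -
  show U: "U \<in> carrier_mat (s p) (s p)" by (simp add: U_def blkdiag_def)
  have Ue: "U $$ (i,j) = (if blk i = blk j then Us (blk i) $$ (off i, off j) else 0)" if "i < s p" "j < s p" for i j
    using blkdiag_entry[OF that] by (simp add: U_def)
  show "\<And>i j. i < s p \<Longrightarrow> j < s p \<Longrightarrow> blk i \<noteq> blk j \<Longrightarrow> U $$ (i,j) = 0" using Ue by simp
  show "transpose_mat U * U = 1\<^sub>m (s p)"
  proof (rule eq_matI)
    fix i j assume "i < dim_row (1\<^sub>m (s p) :: real mat)" "j < dim_col (1\<^sub>m (s p) :: real mat)"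
    hence i: "i < s p" and j: "j < s p" by auto
    have "(transpose_mat U * U) $$ (i,j) = (\<Sum>n<s p. U $$ (n,i) * U $$ (n,j))"
      using mat_mult_entry[of "transpose_mat U" "s p" "s p" U "s p" i j] U i j by simp
    also have "\<dots> = (1\<^sub>m (s p) :: real mat) $$ (i,j)"
    proof (cases "blk i = blk j")
      case False
      hence "i \<noteq> j" by auto
      have "U $$ (n,i) * U $$ (n,j) = 0" if "n < s p" for n using Ue[OF that i] Ue[OF that j] False by auto
      hence "(\<Sum>n<s p. U $$ (n,i) * U $$ (n,j)) = 0" by (intro sum.neutral) simp
      thus ?thesis using \<open>i \<noteq> j\<close> i j by simp
    next
      case True
      define k where "k = blk i"
      have k: "k \<in> {1..p}" using blk[OF i] k_def by simp
      have Uk: "Us k \<in> carrier_mat (bsz k) (bsz k)" "transpose_mat (Us k) * Us k = 1\<^sub>m (bsz k)"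
        using Us[OF k] by (auto simp: orth_mats_def bsz_def)
      have "(\<Sum>n<s p. U $$ (n,i) * U $$ (n,j)) =
          (\<Sum>n<s p. (if blk n = k then Us k $$ (off n, off i) else 0) * (if blk n = k then Us k $$ (off n, off j) else 0))"
        using True by (intro sum.cong refl) (auto simp: Ue i j k_def)
      also have "\<dots> = (\<Sum>x<bsz k. Us k $$ (x, off i) * Us k $$ (x, off j))" by (rule sum_blk2[OF k])
      also have "\<dots> = (transpose_mat (Us k) * Us k) $$ (off i, off j)"
        using Uk off_less[OF i] off_less[OF j] True k_def
        by (subst mat_mult_entry[of _ "bsz k" "bsz k" _ "bsz k"]) auto
      also have "\<dots> = (if off i = off j then 1 else 0)"
        using Uk off_less[OF i] off_less[OF j] True k_def by simp
      also have "\<dots> = (1\<^sub>m (s p) :: real mat) $$ (i,j)"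
        using blk_same_off[OF i j True] i j by auto
      finally show ?thesis .
    qed
    finally show "(transpose_mat U * U) $$ (i,j) = (1\<^sub>m (s p) :: real mat) $$ (i,j)" .
  qed (use U in auto)
qed

definition blocks_of :: "real mat \<Rightarrow> nat \<Rightarrow> real mat" where
  "blocks_of U k = mat (bsz k) (bsz k) (\<lambda>(x,y). U $$ (s (k-1) + x, s (k-1) + y))"

lemma blk_orth_of:
  fixes U :: "real mat"
  assumes U: "U \<in> carrier_mat (s p) (s p)" and UU: "transpose_mat U * U = 1\<^sub>m (s p)"
    and bd: "\<And>i j. i < s p \<Longrightarrow> j < s p \<Longrightarrow> blk i \<noteq> blk j \<Longrightarrow> U $$ (i,j) = 0"
  shows "U \<in> blk_orth s p"
proof -
  have eq: "U = blkdiag s p (blocks_of U)"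
  proof (rule eq_matI)
    fix i j assume "i < dim_row (blkdiag s p (blocks_of U))" "j < dim_col (blkdiag s p (blocks_of U))"
    hence i: "i < s p" and j: "j < s p" by (auto simp: blkdiag_def)
    show "U $$ (i,j) = blkdiag s p (blocks_of U) $$ (i,j)"
      unfolding blkdiag_entry[OF i j] using bd[OF i j] off_less[OF i] off_less[OF j]
      by (auto simp: blocks_of_def)
  qed (use U in \<open>auto simp: blkdiag_def\<close>)
  have orth: "blocks_of U k \<in> orth_mats (s k - s (k-1))" if k: "k \<in> {1..p}" for k
  proof -
    have c: "blocks_of U k \<in> carrier_mat (bsz k) (bsz k)" by (simp add: blocks_of_def)
    have "transpose_mat (blocks_of U k) * blocks_of U k = 1\<^sub>m (bsz k)"
    proof (rule eq_matI)
      fix x y assume "x < dim_row (1\<^sub>m (bsz k) :: real mat)" "y < dim_col (1\<^sub>m (bsz k) :: real mat)"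
      hence x: "x < bsz k" and y: "y < bsz k" by auto
      note sx = blk_shift[OF k x] and sy = blk_shift[OF k y]
      have "(transpose_mat (blocks_of U k) * blocks_of U k) $$ (x,y) = (\<Sum>z<bsz k. U $$ (s (k-1) + z, s (k-1) + x) * U $$ (s (k-1) + z, s (k-1) + y))"
        using x y by (subst mat_mult_entry[of _ "bsz k" "bsz k" _ "bsz k"]) (auto simp: blocks_of_def)
      also have "\<dots> = (\<Sum>n<s p. if blk n = k then U $$ (n, s (k-1) + x) * U $$ (n, s (k-1) + y) else 0)"
        by (rule sum_blk[OF k, symmetric])
      also have "\<dots> = (\<Sum>n<s p. U $$ (n, s (k-1) + x) * U $$ (n, s (k-1) + y))"
        using sx sy by (intro sum.cong refl) (auto simp: bd)
      also have "\<dots> = (transpose_mat U * U) $$ (s (k-1) + x, s (k-1) + y)"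
        using U sx sy by (subst mat_mult_entry[of _ "s p" "s p" _ "s p"]) auto
      also have "\<dots> = (1\<^sub>m (bsz k) :: real mat) $$ (x,y)" using UU sx sy x y by simp
      finally show "(transpose_mat (blocks_of U k) * blocks_of U k) $$ (x,y) = (1\<^sub>m (bsz k) :: real mat) $$ (x,y)" .
    qed (use c in auto)
    thus ?thesis using c by (simp add: orth_mats_def bsz_def)
  qed
  show ?thesis unfolding blk_orth_def using eq orth by blast
qed

end


lemma sum_indicator_card:
  fixes n :: nat shows "(\<Sum>k<n. if P k then 1 else 0 :: real) = real (card {k. k < n \<and> P k})"
proof -
  have "(\<Sum>k<n. if P k then 1 else 0 :: real) = (\<Sum>k\<in>{..<n} \<inter> {k. P k}. 1)"
    by (subst sum.inter_restrict) auto
  also have "{..<n} \<inter> {k. P k} = {k. k < n \<and> P k}" by auto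
  finally show ?thesis by simp
qed

lemma min_ineq: fixes x y z :: real assumes "z \<le> x" "z \<le> y" shows "\<bar>x - y\<bar> \<le> x + y - 2 * z"
  using assms by linarith

context wsetting
begin

lemma VVT: "V * transpose_mat V = 1\<^sub>m r"
  using mat_mult_left_right_inverse[OF _ V VV] V by simp

lemma Vrow: "l < r \<Longrightarrow> l' < r \<Longrightarrow> (\<Sum>k<r. V $$ (l,k) * V $$ (l',k)) = (if l = l' then 1 else 0)"
proof -
  assume l: "l < r" "l' < r"
  have "(V * transpose_mat V) $$ (l,l') = (\<Sum>k<r. V $$ (l,k) * V $$ (l',k))"
    using mat_mult_entry[of V r r "transpose_mat V" r l l'] V l by simp
  thus ?thesis using VVT l by simp
qed

lemma sg_sq: "(sg k)^2 = 1" by (simp add: sg_def)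

lemma W_norm: "(\<Sum>l<r. \<Sum>m<r. (W $$ (l,m))^2) = r"
proof -
  have "(\<Sum>l<r. \<Sum>m<r. (W $$ (l,m))^2) = (\<Sum>l<r. \<Sum>m<r. (\<Sum>k<r. V $$ (l,k) * sg k * V $$ (m,k))^2)"
    by (intro sum.cong refl) (simp add: W_entry)
  also have "\<dots> = (\<Sum>k<r. (sg k)^2 * (\<Sum>m<r. (V $$ (m,k))^2))" by (rule sumsq_conj) (rule Vcol)
  also have "\<dots> = r" by (simp add: Vcol1 sg_sq)
  finally show ?thesis .
qed

lemma signature:
  fixes U0 :: "real mat"
  assumes U0: "U0 \<in> carrier_mat r r" and U0U0: "transpose_mat U0 * U0 = 1\<^sub>m r"
    and U0bd: "\<And>i j. i < r \<Longrightarrow> j < r \<Longrightarrow> blk i \<noteq> blk j \<Longrightarrow> U0 $$ (i,j) = 0"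
    and close0: "(fro_norm (Bm - U0 * diag_vec r q * transpose_mat U0))^2 < 1"
    and close: "(fro_norm (Bm - W))^2 < 1"
    and b: "b \<in> {1..p}"
  shows "card {k. k < r \<and> blk k = b \<and> sg k = 1} = card {k. k < r \<and> blk k = b \<and> q (k+1) = 1}"
proof -
  define qq where "qq m = q (Suc m)" for m
  have Dq: "diag_vec r q = mat_diag r qq" unfolding diag_vec_def mat_diag_def qq_def
    by (intro eq_matI) auto
  define W0 where "W0 = U0 * mat_diag r qq * transpose_mat U0"
  have W0: "W0 \<in> carrier_mat r r" unfolding W0_def
    by (rule mult_carrier_mat[OF mult_carrier_mat[OF U0 mat_diag_dim]]) (use U0 in simp)
  have W0e: "W0 $$ (l,m) = (\<Sum>k<r. U0 $$ (l,k) * qq k * U0 $$ (m,k))" if "l < r" "m < r" for l m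
    unfolding W0_def by (rule mat_diag_conj_entry[OF U0 U0 that])
  have qq: "qq m = 1 \<or> qq m = -1" if "m < r" for m using q_sign[of "Suc m"] that by (simp add: qq_def)
  have qq2: "(qq m)^2 = 1" if "m < r" for m using qq[OF that] by auto
  have U0U0T: "U0 * transpose_mat U0 = 1\<^sub>m r" using mat_mult_left_right_inverse[OF _ U0 U0U0] U0 by simp
  have U0col: "(\<Sum>i<r. U0 $$ (i,k) * U0 $$ (i,k')) = (if k = k' then 1 else 0)" if "k < r" "k' < r" for k k'
  proof -
    have "(transpose_mat U0 * U0) $$ (k,k') = (\<Sum>i<r. U0 $$ (i,k) * U0 $$ (i,k'))"
      using mat_mult_entry[of "transpose_mat U0" r r U0 r k k'] U0 that by simp
    thus ?thesis using U0U0 that by simp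
  qed
  have U0row: "(\<Sum>k<r. U0 $$ (l,k) * U0 $$ (l',k)) = (if l = l' then 1 else 0)" if "l < r" "l' < r" for l l'
  proof -
    have "(U0 * transpose_mat U0) $$ (l,l') = (\<Sum>k<r. U0 $$ (l,k) * U0 $$ (l',k))"
      using mat_mult_entry[of U0 r r "transpose_mat U0" r l l'] U0 that by simp
    thus ?thesis using U0U0T that by simp
  qed
  have W0_norm: "(\<Sum>l<r. \<Sum>m<r. (W0 $$ (l,m))^2) = r"
  proof -
    have "(\<Sum>l<r. \<Sum>m<r. (W0 $$ (l,m))^2) = (\<Sum>l<r. \<Sum>m<r. (\<Sum>k<r. U0 $$ (l,k) * qq k * U0 $$ (m,k))^2)"
      by (intro sum.cong refl) (simp add: W0e)
    also have "\<dots> = (\<Sum>k<r. (qq k)^2 * (\<Sum>m<r. (U0 $$ (m,k))^2))" by (rule sumsq_conj) (rule U0col)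
    also have "\<dots> = (\<Sum>k<r. (1::real))"
    proof (intro sum.cong refl)
      fix k assume k: "k \<in> {..<r}"
      have "(\<Sum>m<r. (U0 $$ (m,k))^2) = 1" using U0col[of k k] k by (simp add: power2_eq_square)
      thus "(qq k)^2 * (\<Sum>m<r. (U0 $$ (m,k))^2) = 1" using qq2[of k] k by simp
    qed
    also have "\<dots> = r" by simp
    finally show ?thesis .
  qed
  define F where "F k m = (\<Sum>l<r. V $$ (l,k) * U0 $$ (l,m))" for k m
  have Fbd: "F k m = 0" if "k < r" "m < r" "blk k \<noteq> blk m" for k m
  proof -
    have "V $$ (l,k) * U0 $$ (l,m) = 0" if "l < r" for l
    proof (cases "blk l = blk k")
      case True thus ?thesis using U0bd[of l m] that \<open>m < r\<close> \<open>blk k \<noteq> blk m\<close> by simp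
    next
      case False thus ?thesis using Vbd[of l k] that \<open>k < r\<close> by simp
    qed
    thus ?thesis unfolding F_def by (intro sum.neutral) simp
  qed
  have Frow: "(\<Sum>m<r. (F k m)^2) = 1" if k: "k < r" for k
  proof -
    have "(\<Sum>m<r. (F k m)^2) = (\<Sum>m<r. \<Sum>j\<in>{0::nat}. (\<Sum>l<r. U0 $$ (l,m) * V $$ (l,k) * 1)^2)"
      by (simp add: F_def mult.commute)
    also have "\<dots> = (\<Sum>l<r. (V $$ (l,k))^2 * (\<Sum>j\<in>{0::nat}. 1^2))"
      by (rule sumsq_conj[where X="\<lambda>m l. U0 $$ (l,m)"]) (simp add: U0row)
    also have "\<dots> = 1" using Vcol1[OF k] by simp
    finally show ?thesis .
  qed
  have Fcol: "(\<Sum>k<r. (F k m)^2) = 1" if m: "m < r" for m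
  proof -
    have "(\<Sum>k<r. (F k m)^2) = (\<Sum>k<r. \<Sum>j\<in>{0::nat}. (\<Sum>l<r. V $$ (l,k) * U0 $$ (l,m) * 1)^2)"
      by (simp add: F_def)
    also have "\<dots> = (\<Sum>l<r. (U0 $$ (l,m))^2 * (\<Sum>j\<in>{0::nat}. 1^2))"
      by (rule sumsq_conj[where X="\<lambda>k l. V $$ (l,k)"]) (simp add: Vrow)
    also have "\<dots> = 1" using U0col[OF m m] by (simp add: power2_eq_square)
    finally show ?thesis .
  qed
  have inner: "(\<Sum>l<r. \<Sum>l'<r. W $$ (l,l') * W0 $$ (l,l')) = (\<Sum>k<r. \<Sum>m<r. sg k * qq m * (F k m)^2)"
  proof -
    have "(\<Sum>l<r. \<Sum>l'<r. W $$ (l,l') * W0 $$ (l,l'))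
        = (\<Sum>l<r. \<Sum>l'<r. \<Sum>k<r. \<Sum>m<r. (V $$ (l,k) * U0 $$ (l,m)) * (sg k * qq m * (V $$ (l',k) * U0 $$ (l',m))))"
    proof (intro sum.cong refl)
      fix l l' assume l: "l \<in> {..<r}" and l': "l' \<in> {..<r}"
      have "W $$ (l,l') * W0 $$ (l,l') = (\<Sum>k<r. V $$ (l,k) * sg k * V $$ (l',k)) * (\<Sum>m<r. U0 $$ (l,m) * qq m * U0 $$ (l',m))"
        using l l' by (simp add: W_entry W0e)
      also have "\<dots> = (\<Sum>k<r. \<Sum>m<r. (V $$ (l,k) * sg k * V $$ (l',k)) * (U0 $$ (l,m) * qq m * U0 $$ (l',m)))"
        by (rule sum_product)
      also have "\<dots> = (\<Sum>k<r. \<Sum>m<r. (V $$ (l,k) * U0 $$ (l,m)) * (sg k * qq m * (V $$ (l',k) * U0 $$ (l',m))))"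
        by (simp add: mult_ac)
      finally show "W $$ (l,l') * W0 $$ (l,l') = (\<Sum>k<r. \<Sum>m<r. (V $$ (l,k) * U0 $$ (l,m)) * (sg k * qq m * (V $$ (l',k) * U0 $$ (l',m))))" .
    qed
    also have "\<dots> = (\<Sum>k<r. \<Sum>m<r. \<Sum>l<r. \<Sum>l'<r. (V $$ (l,k) * U0 $$ (l,m)) * (sg k * qq m * (V $$ (l',k) * U0 $$ (l',m))))"
      by (rule swap4)
    also have "\<dots> = (\<Sum>k<r. \<Sum>m<r. sg k * qq m * (F k m)^2)"
    proof (intro sum.cong refl)
      fix k m
      have "(\<Sum>l<r. \<Sum>l'<r. (V $$ (l,k) * U0 $$ (l,m)) * (sg k * qq m * (V $$ (l',k) * U0 $$ (l',m))))
          = (\<Sum>l<r. (V $$ (l,k) * U0 $$ (l,m)) * (sg k * qq m * (\<Sum>l'<r. V $$ (l',k) * U0 $$ (l',m))))"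
        by (simp add: sum_distrib_left)
      also have "\<dots> = sg k * qq m * ((\<Sum>l<r. V $$ (l,k) * U0 $$ (l,m)) * (\<Sum>l'<r. V $$ (l',k) * U0 $$ (l',m)))"
        by (simp add: sum_distrib_right sum_distrib_left mult_ac)
      also have "\<dots> = sg k * qq m * (F k m)^2" by (simp add: F_def power2_eq_square)
      finally show "(\<Sum>l<r. \<Sum>l'<r. (V $$ (l,k) * U0 $$ (l,m)) * (sg k * qq m * (V $$ (l',k) * U0 $$ (l',m)))) = sg k * qq m * (F k m)^2" .
    qed
    finally show ?thesis .
  qed
  have diff: "(\<Sum>l<r. \<Sum>l'<r. (W $$ (l,l') - W0 $$ (l,l'))^2) = 2 * r - 2 * (\<Sum>k<r. \<Sum>m<r. sg k * qq m * (F k m)^2)"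
  proof -
    have "(\<Sum>l<r. \<Sum>l'<r. (W $$ (l,l') - W0 $$ (l,l'))^2) = (\<Sum>l<r. \<Sum>l'<r. (W $$ (l,l'))^2) + (\<Sum>l<r. \<Sum>l'<r. (W0 $$ (l,l'))^2)
        - 2 * (\<Sum>l<r. \<Sum>l'<r. W $$ (l,l') * W0 $$ (l,l'))"
      by (simp add: power2_diff sum.distrib sum_subtractf sum_distrib_left mult.assoc)
    thus ?thesis using W_norm W0_norm inner by simp
  qed
  have lt4: "(\<Sum>l<r. \<Sum>l'<r. (W $$ (l,l') - W0 $$ (l,l'))^2) < 4"
  proof -
    have "(\<Sum>l<r. \<Sum>l'<r. (W $$ (l,l') - W0 $$ (l,l'))^2) \<le>
        (\<Sum>l<r. \<Sum>l'<r. 2 * (Bm $$ (l,l') - W $$ (l,l'))^2 + 2 * (Bm $$ (l,l') - W0 $$ (l,l'))^2)"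
    proof (intro sum_mono)
      fix l l'
      have "0 \<le> (2 * Bm $$ (l,l') - W $$ (l,l') - W0 $$ (l,l'))^2" by simp
      thus "(W $$ (l,l') - W0 $$ (l,l'))^2 \<le> 2 * (Bm $$ (l,l') - W $$ (l,l'))^2 + 2 * (Bm $$ (l,l') - W0 $$ (l,l'))^2"
        by (simp add: power2_eq_square algebra_simps)
    qed
    also have "\<dots> = 2 * (fro_norm (Bm - W))^2 + 2 * (fro_norm (Bm - W0))^2"
      by (simp add: fro_norm_diff_sq[OF Bm W] fro_norm_diff_sq[OF Bm W0] sum.distrib sum_distrib_left)
    also have "\<dots> < 4" using close close0 unfolding W0_def Dq by simp
    finally show ?thesis .
  qed
  define e where "e k = (if sg k = 1 then 1 else 0 :: real)" for k
  define e0 where "e0 m = (if qq m = 1 then 1 else 0 :: real)" for m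
  have sge: "sg k = 2 * e k - 1" for k by (simp add: e_def sg_def)
  have qqe: "qq m = 2 * e0 m - 1" if "m < r" for m using qq[OF that] by (auto simp: e0_def)
  define X where "X = (\<Sum>k<r. \<Sum>m<r. e k * e0 m * (F k m)^2)"
  define P where "P = (\<Sum>k<r. e k)"
  define P0 where "P0 = (\<Sum>m<r. e0 m)"
  have inner2: "(\<Sum>k<r. \<Sum>m<r. sg k * qq m * (F k m)^2) = 4 * X - 2 * P - 2 * P0 + r"
  proof -
    have "(\<Sum>k<r. \<Sum>m<r. sg k * qq m * (F k m)^2) = (\<Sum>k<r. \<Sum>m<r. 4 * (e k * e0 m * (F k m)^2) - 2 * (e k * (F k m)^2) - 2 * (e0 m * (F k m)^2) + (F k m)^2)"
    proof (intro sum.cong refl)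
      fix k m assume m: "m \<in> {..<r}"
      show "sg k * qq m * (F k m)^2 = 4 * (e k * e0 m * (F k m)^2) - 2 * (e k * (F k m)^2) - 2 * (e0 m * (F k m)^2) + (F k m)^2"
        unfolding sge qqe[of m, OF m[simplified]] by (simp add: algebra_simps)
    qed
    also have "\<dots> = 4 * X - 2 * (\<Sum>k<r. e k * (\<Sum>m<r. (F k m)^2)) - 2 * (\<Sum>k<r. \<Sum>m<r. e0 m * (F k m)^2) + (\<Sum>k<r. \<Sum>m<r. (F k m)^2)"
      unfolding X_def by (simp add: sum.distrib sum_subtractf sum_distrib_left)
    also have "(\<Sum>k<r. e k * (\<Sum>m<r. (F k m)^2)) = P" unfolding P_def by (simp add: Frow)
    also have "(\<Sum>k<r. \<Sum>m<r. e0 m * (F k m)^2) = (\<Sum>m<r. e0 m * (\<Sum>k<r. (F k m)^2))"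
      by (subst sum.swap) (simp add: sum_distrib_left)
    also have "\<dots> = P0" unfolding P0_def by (simp add: Fcol)
    also have "(\<Sum>k<r. \<Sum>m<r. (F k m)^2) = r" by (simp add: Frow)
    finally show ?thesis .
  qed
  define Pb where "Pb = (\<Sum>k<r. if blk k = b then e k else 0)"
  define P0b where "P0b = (\<Sum>m<r. if blk m = b then e0 m else 0)"
  define Xb where "Xb = (\<Sum>k<r. \<Sum>m<r. if blk k = b \<and> blk m = b then e k * e0 m * (F k m)^2 else 0)"
  define Xn where "Xn = (\<Sum>k<r. \<Sum>m<r. if blk k \<noteq> b \<and> blk m \<noteq> b then e k * e0 m * (F k m)^2 else 0)"
  have e01: "0 \<le> e k" "e k \<le> 1" "0 \<le> e0 k" "e0 k \<le> 1" for k by (auto simp: e_def e0_def)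
  have XX: "X = Xb + Xn" unfolding X_def Xb_def Xn_def sum.distrib[symmetric]
    by (intro sum.cong refl) (auto simp: Fbd)
  have rowb: "(\<Sum>m<r. if C m then e k * e0 m * (F k m)^2 else 0) \<le> e k" if k: "k < r" for k C
  proof -
    have "(\<Sum>m<r. if C m then e k * e0 m * (F k m)^2 else 0) \<le> (\<Sum>m<r. e k * (F k m)^2)"
    proof (intro sum_mono)
      fix m
      have "e k * e0 m * (F k m)^2 \<le> e k * 1 * (F k m)^2"
        using e01 by (intro mult_right_mono mult_left_mono) auto
      thus "(if C m then e k * e0 m * (F k m)^2 else 0) \<le> e k * (F k m)^2" using e01 by auto
    qed
    also have "\<dots> = e k" using Frow[OF k] by (simp add: sum_distrib_left[symmetric])
    finally show ?thesis .
  qed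
  have colb: "(\<Sum>k<r. if C k then e k * e0 m * (F k m)^2 else 0) \<le> e0 m" if m: "m < r" for m C
  proof -
    have "(\<Sum>k<r. if C k then e k * e0 m * (F k m)^2 else 0) \<le> (\<Sum>k<r. e0 m * (F k m)^2)"
    proof (intro sum_mono)
      fix k
      have "e k * e0 m * (F k m)^2 \<le> 1 * e0 m * (F k m)^2"
        using e01 by (intro mult_right_mono) auto
      thus "(if C k then e k * e0 m * (F k m)^2 else 0) \<le> e0 m * (F k m)^2" using e01 by auto
    qed
    also have "\<dots> = e0 m" using Fcol[OF m] by (simp add: sum_distrib_left[symmetric])
    finally show ?thesis .
  qed
  have Xb1: "Xb \<le> Pb" unfolding Xb_def Pb_def
  proof (intro sum_mono)
    fix k assume k: "k \<in> {..<r}"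
    show "(\<Sum>m<r. if blk k = b \<and> blk m = b then e k * e0 m * (F k m)^2 else 0) \<le> (if blk k = b then e k else 0)"
      using rowb[of k "\<lambda>m. blk m = b"] k by auto
  qed
  have Xb2: "Xb \<le> P0b"
  proof -
    have "Xb = (\<Sum>m<r. \<Sum>k<r. if blk k = b \<and> blk m = b then e k * e0 m * (F k m)^2 else 0)"
      unfolding Xb_def by (rule sum.swap)
    also have "\<dots> \<le> P0b" unfolding P0b_def
    proof (intro sum_mono)
      fix m assume m: "m \<in> {..<r}"
      show "(\<Sum>k<r. if blk k = b \<and> blk m = b then e k * e0 m * (F k m)^2 else 0) \<le> (if blk m = b then e0 m else 0)"
        using colb[of m "\<lambda>k. blk k = b"] m by auto
    qed
    finally show ?thesis .
  qed
  have Pn: "P - Pb = (\<Sum>k<r. if blk k \<noteq> b then e k else 0)"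
    unfolding P_def Pb_def sum_subtractf[symmetric] by (intro sum.cong refl) auto
  have P0n: "P0 - P0b = (\<Sum>m<r. if blk m \<noteq> b then e0 m else 0)"
    unfolding P0_def P0b_def sum_subtractf[symmetric] by (intro sum.cong refl) auto
  have Xn1: "Xn \<le> P - Pb" unfolding Xn_def Pn
  proof (intro sum_mono)
    fix k assume k: "k \<in> {..<r}"
    show "(\<Sum>m<r. if blk k \<noteq> b \<and> blk m \<noteq> b then e k * e0 m * (F k m)^2 else 0) \<le> (if blk k \<noteq> b then e k else 0)"
      using rowb[of k "\<lambda>m. blk m \<noteq> b"] k by auto
  qed
  have Xn2: "Xn \<le> P0 - P0b"
  proof -
    have "Xn = (\<Sum>m<r. \<Sum>k<r. if blk k \<noteq> b \<and> blk m \<noteq> b then e k * e0 m * (F k m)^2 else 0)"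
      unfolding Xn_def by (rule sum.swap)
    also have "\<dots> \<le> P0 - P0b" unfolding P0n
    proof (intro sum_mono)
      fix m assume m: "m \<in> {..<r}"
      show "(\<Sum>k<r. if blk k \<noteq> b \<and> blk m \<noteq> b then e k * e0 m * (F k m)^2 else 0) \<le> (if blk m \<noteq> b then e0 m else 0)"
        using colb[of m "\<lambda>k. blk k \<noteq> b"] m by auto
    qed
    finally show ?thesis .
  qed
  have "\<bar>Pb - P0b\<bar> \<le> Pb + P0b - 2 * Xb" using Xb1 Xb2 by (rule min_ineq)
  moreover have "0 \<le> (P - Pb) + (P0 - P0b) - 2 * Xn" using Xn1 Xn2 by linarith
  ultimately have "\<bar>Pb - P0b\<bar> \<le> P + P0 - 2 * X" using XX by linarith
  hence "4 * \<bar>Pb - P0b\<bar> \<le> 4 * (P + P0 - 2 * X)" by simp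
  also have "\<dots> = (\<Sum>l<r. \<Sum>l'<r. (W $$ (l,l') - W0 $$ (l,l'))^2)" using diff inner2 by simp
  finally have "\<bar>Pb - P0b\<bar> < 1" using lt4 by simp
  moreover have "Pb = real (card {k. k < r \<and> blk k = b \<and> sg k = 1})"
  proof -
    have "Pb = (\<Sum>k<r. if blk k = b \<and> sg k = 1 then 1 else 0)"
      unfolding Pb_def e_def by (intro sum.cong refl) auto
    thus ?thesis using sum_indicator_card[where n=r and P="\<lambda>k. blk k = b \<and> sg k = 1"] by simp
  qed
  moreover have "P0b = real (card {k. k < r \<and> blk k = b \<and> q (k+1) = 1})"
  proof -
    have "P0b = (\<Sum>k<r. if blk k = b \<and> q (k+1) = 1 then 1 else 0)"
      unfolding P0b_def e0_def qq_def by (intro sum.cong refl) auto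
    thus ?thesis using sum_indicator_card[where n=r and P="\<lambda>k. blk k = b \<and> q (k+1) = 1"] by simp
  qed
  ultimately show ?thesis by linarith
qed

end


lemma perm_exists:
  fixes f g :: "nat \<Rightarrow> 'b"
  assumes cards: "\<And>t. card {k. k < n \<and> f k = t} = card {k. k < n \<and> g k = t}"
  shows "\<exists>\<pi>. bij_betw \<pi> {..<n} {..<n} \<and> (\<forall>k<n. g (\<pi> k) = f k)"
proof -
  define Af where "Af t = {k. k < n \<and> f k = t}" for t
  define Ag where "Ag t = {k. k < n \<and> g k = t}" for t
  have ex: "\<exists>h. bij_betw h (Af t) (Ag t)" for t
    unfolding Af_def Ag_def by (rule finite_same_card_bij) (use cards in auto)
  define h where "h t = (SOME h. bij_betw h (Af t) (Ag t))" for t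
  have h: "bij_betw (h t) (Af t) (Ag t)" for t unfolding h_def by (rule someI_ex[OF ex])
  define \<pi> where "\<pi> k = h (f k) k" for k
  have maps: "\<pi> k < n \<and> g (\<pi> k) = f k" if "k < n" for k
  proof -
    have "k \<in> Af (f k)" using that by (simp add: Af_def)
    hence "\<pi> k \<in> Ag (f k)" using h[of "f k"] unfolding \<pi>_def by (auto simp: bij_betw_def)
    thus ?thesis by (simp add: Ag_def)
  qed
  have inj: "inj_on \<pi> {..<n}"
  proof (rule inj_onI)
    fix k k' assume k: "k \<in> {..<n}" and k': "k' \<in> {..<n}" and eq: "\<pi> k = \<pi> k'"
    have "f k = f k'" using maps[of k] maps[of k'] k k' eq by auto
    hence "h (f k) k = h (f k) k'" using eq by (simp add: \<pi>_def)
    moreover have "k \<in> Af (f k)" "k' \<in> Af (f k)" using k k' \<open>f k = f k'\<close> by (auto simp: Af_def)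
    ultimately show "k = k'" using h[of "f k"] by (auto simp: bij_betw_def inj_on_def)
  qed
  have sub: "\<pi> ` {..<n} \<subseteq> {..<n}" using maps by auto
  have "\<pi> ` {..<n} = {..<n}"
    using sub card_image[OF inj] by (intro card_subset_eq) auto
  hence "bij_betw \<pi> {..<n} {..<n}" using inj by (simp add: bij_betw_def)
  thus ?thesis using maps by blast
qed

lemma card_split:
  fixes n :: nat
  shows "card {k. k < n \<and> A k} = card {k. k < n \<and> A k \<and> B k} + card {k. k < n \<and> A k \<and> \<not> B k}"
proof -
  have "{k. k < n \<and> A k} = {k. k < n \<and> A k \<and> B k} \<union> {k. k < n \<and> A k \<and> \<not> B k}" by auto
  moreover have "{k. k < n \<and> A k \<and> B k} \<inter> {k. k < n \<and> A k \<and> \<not> B k} = {}" by auto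
  ultimately show ?thesis by (simp add: card_Un_disjoint)
qed

context wsetting
begin

lemma W_in_Qset1:
  assumes sig: "\<And>b. b \<in> {1..p} \<Longrightarrow> card {k. k < r \<and> blk k = b \<and> sg k = 1} = card {k. k < r \<and> blk k = b \<and> q (k+1) = 1}"
  shows "W \<in> Qset1 s p q"
proof -
  define f where "f k = (blk k, q (k+1) = 1)" for k
  define g where "g k = (blk k, sg k = 1)" for k
  have cards: "card {k. k < r \<and> f k = t} = card {k. k < r \<and> g k = t}" for t
  proof (cases t)
    case (Pair b c)
    show ?thesis
    proof (cases "b \<in> {1..p}")
      case False
      have e1: "{k. k < r \<and> f k = t} = {}" "{k. k < r \<and> g k = t} = {}"
        using blk[of _] sp False Pair by (auto simp: f_def g_def)
      show ?thesis unfolding e1 ..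
    next
      case b: True
      have tot: "card {k. k < r \<and> blk k = b \<and> sg k = 1} + card {k. k < r \<and> blk k = b \<and> \<not> sg k = 1}
          = card {k. k < r \<and> blk k = b \<and> q (k+1) = 1} + card {k. k < r \<and> blk k = b \<and> \<not> q (k+1) = 1}"
        using card_split[of r "\<lambda>k. blk k = b" "\<lambda>k. sg k = 1"] card_split[of r "\<lambda>k. blk k = b" "\<lambda>k. q (k+1) = 1"]
        by simp
      show ?thesis
      proof (cases c)
        case True
        have "{k. k < r \<and> f k = t} = {k. k < r \<and> blk k = b \<and> q (k+1) = 1}"
             "{k. k < r \<and> g k = t} = {k. k < r \<and> blk k = b \<and> sg k = 1}"
          using Pair True by (auto simp: f_def g_def)
        thus ?thesis using sig[OF b] by simp
      next
        case False
        have "{k. k < r \<and> f k = t} = {k. k < r \<and> blk k = b \<and> \<not> q (k+1) = 1}"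
             "{k. k < r \<and> g k = t} = {k. k < r \<and> blk k = b \<and> \<not> sg k = 1}"
          using Pair False by (auto simp: f_def g_def)
        thus ?thesis using sig[OF b] tot by simp
      qed
    qed
  qed
  obtain \<pi> where pi: "bij_betw \<pi> {..<r} {..<r}" and pg: "\<And>k. k < r \<Longrightarrow> g (\<pi> k) = f k"
    using perm_exists[OF cards] by blast
  have pir: "\<pi> k < r" if "k < r" for k using pi that by (auto simp: bij_betw_def)
  have piblk: "blk (\<pi> k) = blk k" if "k < r" for k using pg[OF that] by (simp add: f_def g_def)
  have pisg: "sg (\<pi> k) = q (k+1)" if "k < r" for k
  proof -
    have "(sg (\<pi> k) = 1) = (q (k+1) = 1)" using pg[OF that] by (simp add: f_def g_def)
    moreover have "q (k+1) = 1 \<or> q (k+1) = -1" using q_sign[of "k+1"] that by auto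
    moreover have "sg (\<pi> k) = 1 \<or> sg (\<pi> k) = -1" by (simp add: sg_def)
    ultimately show ?thesis by auto
  qed
  have piinj: "\<pi> k = \<pi> k' \<Longrightarrow> k < r \<Longrightarrow> k' < r \<Longrightarrow> k = k'" for k k'
    using pi by (auto simp: bij_betw_def inj_on_def)
  define U where "U = mat r r (\<lambda>(i,k). V $$ (i, \<pi> k))"
  have U: "U \<in> carrier_mat r r" by (simp add: U_def)
  have UU: "transpose_mat U * U = 1\<^sub>m r"
  proof (rule eq_matI)
    fix k k' assume "k < dim_row (1\<^sub>m r :: real mat)" "k' < dim_col (1\<^sub>m r :: real mat)"
    hence k: "k < r" and k': "k' < r" by auto
    have "(transpose_mat U * U) $$ (k,k') = (\<Sum>i<r. V $$ (i, \<pi> k) * V $$ (i, \<pi> k'))"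
      using mult_transpose_entry[OF U U k k'] k k' by (simp add: U_def)
    also have "\<dots> = (if \<pi> k = \<pi> k' then 1 else 0)" using Vcol[OF pir[OF k] pir[OF k']] .
    also have "\<dots> = (1\<^sub>m r :: real mat) $$ (k,k')" using piinj[of k k'] k k' by auto
    finally show "(transpose_mat U * U) $$ (k,k') = (1\<^sub>m r :: real mat) $$ (k,k')" .
  qed (use U in auto)
  have Ubd: "U $$ (i,j) = 0" if "i < r" "j < r" "blk i \<noteq> blk j" for i j
    using Vbd[of i "\<pi> j"] that pir piblk by (simp add: U_def)
  have "U \<in> blk_orth s p" using blk_orth_of[of U] U UU Ubd unfolding sp by blast
  moreover have "W = U * diag_vec (s p) q * transpose_mat U"
  proof -
    define qq where "qq m = q (Suc m)" for m
    have Dq: "diag_vec r q = mat_diag r qq" unfolding diag_vec_def mat_diag_def qq_def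
      by (intro eq_matI) auto
    have "U * mat_diag r qq * transpose_mat U = W"
    proof (rule eq_matI)
      fix i j assume "i < dim_row W" "j < dim_col W"
      hence i: "i < r" and j: "j < r" using W by auto
      have "(U * mat_diag r qq * transpose_mat U) $$ (i,j) = (\<Sum>k<r. V $$ (i, \<pi> k) * qq k * V $$ (j, \<pi> k))"
        using mat_diag_conj_entry[OF U U i j] i j by (simp add: U_def)
      also have "\<dots> = (\<Sum>k<r. V $$ (i, \<pi> k) * sg (\<pi> k) * V $$ (j, \<pi> k))"
        by (intro sum.cong refl) (simp add: qq_def pisg)
      also have "\<dots> = (\<Sum>k<r. V $$ (i, k) * sg k * V $$ (j, k))"
        using sum.reindex_bij_betw[OF pi, of "\<lambda>k. V $$ (i, k) * sg k * V $$ (j, k)"] by simp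
      also have "\<dots> = W $$ (i,j)" using W_entry[OF i j] by simp
      finally show "(U * mat_diag r qq * transpose_mat U) $$ (i,j) = W $$ (i,j)" .
    qed (use U W in auto)
    thus ?thesis using Dq sp by simp
  qed
  ultimately show ?thesis unfolding Qset1_def by blast
qed

end


context setting
begin

lemma dist_le:
  assumes "W \<in> Qset1 s p q"
  shows "dist_set Bm (Qset1 s p q) \<le> fro_norm (Bm - W)"
  unfolding dist_set_def
  by (rule cInf_lower) (use assms fro_norm_nonneg in \<open>auto intro: bdd_belowI[of _ 0]\<close>)

lemma dist_nonneg:
  assumes "W \<in> Qset1 s p q"
  shows "dist_set Bm (Qset1 s p q) \<ge> 0"
  unfolding dist_set_def
  by (rule cInf_greatest) (use assms fro_norm_nonneg in auto)

lemma final_in_setting: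
  assumes Q_close: "dist_set Q (Qset d K s p q) < 1"
  shows "(dist_set (upper_left r Q) (Qset1 s p q))\<^sup>2
          \<le> 1 / (a r)\<^sup>2 * (10 + 6 * (6 * real p - 5) * inv_min_delta_sq a s p)
            * (fro_norm (R_res (A_mat d K r a) Q))\<^sup>2"
proof -
  let ?RHS = "1 / (a r)\<^sup>2 * (10 + 6 * (6 * real p - 5) * inv_min_delta_sq a s p) * (fro_norm (R_res (A_mat d K r a) Q))\<^sup>2"
  have Qne: "Qset d K s p q \<noteq> {}"
  proof -
    have "(1\<^sub>m r :: real mat) $$ (i,j) = 0" if "i < r" "j < r" "blk i \<noteq> blk j" for i j
      using that by auto
    hence I: "1\<^sub>m r \<in> blk_orth s p" using blk_orth_of[of "1\<^sub>m r"] sp by simp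
    define V0 where "V0 = mat (d - s p) (K - s p) (\<lambda>(i,j). if i = j then 1 else (0::real))"
    have "V0 \<in> stiefel (d - s p) (K - s p)"
    proof -
      have "transpose_mat V0 * V0 = 1\<^sub>m (K - s p)"
      proof (rule eq_matI)
        fix i j assume "i < dim_row (1\<^sub>m (K - s p) :: real mat)" "j < dim_col (1\<^sub>m (K - s p) :: real mat)"
        hence i: "i < K - s p" and j: "j < K - s p" by auto
        have iK: "i < d - s p" "j < d - s p" using i j Kd by auto
        have "(transpose_mat V0 * V0) $$ (i,j) = (\<Sum>t<d - s p. V0 $$ (t,i) * V0 $$ (t,j))"
          by (rule mult_transpose_entry) (use i j in \<open>auto simp: V0_def\<close>)
        also have "\<dots> = (\<Sum>t<d - s p. if t = i then (if i = j then 1 else 0) else 0)"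
          by (intro sum.cong refl) (use i j in \<open>auto simp: V0_def\<close>)
        also have "\<dots> = (1\<^sub>m (K - s p) :: real mat) $$ (i,j)" using iK i j by (simp add: sum.delta)
        finally show "(transpose_mat V0 * V0) $$ (i,j) = (1\<^sub>m (K - s p) :: real mat) $$ (i,j)" .
      qed (auto simp: V0_def)
      thus ?thesis by (simp add: stiefel_def V0_def)
    qed
    thus ?thesis using I unfolding Qset_def by blast
  qed
  obtain Wf where Wf: "Wf \<in> Qset d K s p q" and Wf1: "fro_norm (Q - Wf) < 1"
    using cInf_lessD[of "(\<lambda>W. fro_norm (Q - W)) ` Qset d K s p q" 1] Q_close Qne
    unfolding dist_set_def by auto
  then obtain U0 V1 where U0: "U0 \<in> blk_orth s p" and V1: "V1 \<in> stiefel (d - s p) (K - s p)"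
    and Wfd: "Wf = four_block_mat (U0 * diag_vec (s p) q * transpose_mat U0) (0\<^sub>m (s p) (K - s p)) (0\<^sub>m (d - s p) (s p)) V1"
    unfolding Qset_def by blast
  obtain Us where Us: "\<And>k. k \<in> {1..p} \<Longrightarrow> Us k \<in> orth_mats (s k - s (k-1))" and U0d: "U0 = blkdiag s p Us"
    using U0 unfolding blk_orth_def by blast
  have Us': "\<And>k. k \<in> {1..p} \<Longrightarrow> Us k \<in> orth_mats (bsz k)" using Us by (simp add: bsz_def)
  note U0f = blkdiag_orth[OF Us', folded U0d, unfolded sp]
  define W0 where "W0 = U0 * diag_vec r q * transpose_mat U0"
  have W0: "W0 \<in> carrier_mat r r" unfolding W0_def using U0f(1)
    by (intro mult_carrier_mat[of _ r r _ r]) (auto simp: diag_vec_def)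
  have W0Q: "W0 \<in> Qset1 s p q" unfolding Qset1_def W0_def using U0 sp by blast
  have V1c: "V1 \<in> carrier_mat (d - r) (K - r)" using V1 sp by (simp add: stiefel_def)
  have Wf': "Wf = four_block_mat W0 (0\<^sub>m r (K - r)) (0\<^sub>m (d - r) r) V1" using Wfd sp by (simp add: W0_def)
  have Wfc: "Wf \<in> carrier_mat d K"
  proof -
    have "four_block_mat W0 (0\<^sub>m r (K - r)) (0\<^sub>m (d - r) r) V1 \<in> carrier_mat (r + (d - r)) (r + (K - r))"
      by (rule four_block_carrier_mat[OF W0 V1c])
    thus ?thesis using Wf' rK Kd by simp
  qed
  have Wfe: "Wf $$ (i,j) = W0 $$ (i,j)" if "i < r" "j < r" for i j
  proof -
    have "i < dim_row W0 + dim_row V1" "j < dim_col W0 + dim_col V1" using that W0 V1c by auto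
    thus ?thesis unfolding Wf' using that W0 by simp
  qed
  have close0: "(fro_norm (Bm - W0))^2 < 1"
  proof -
    have "(fro_norm (Bm - W0))^2 = (\<Sum>i<r. \<Sum>j<r. (Q $$ (i,j) - Wf $$ (i,j))^2)"
      unfolding fro_norm_diff_sq[OF Bm W0]
      by (intro sum.cong refl) (simp add: Bm_entry Wfe)
    also have "\<dots> \<le> (\<Sum>i<d. \<Sum>j<r. (Q $$ (i,j) - Wf $$ (i,j))^2)"
      using rK Kd by (intro sum_mono2) (auto intro!: sum_nonneg)
    also have "\<dots> \<le> (\<Sum>i<d. \<Sum>j<K. (Q $$ (i,j) - Wf $$ (i,j))^2)"
      using rK by (intro sum_mono sum_mono2) auto
    also have "\<dots> = (fro_norm (Q - Wf))^2" using fro_norm_diff_sq[OF Q Wfc] by simp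
    also have "\<dots> < 1" using Wf1 fro_norm_nonneg[of "Q - Wf"]
      by (metis abs_of_nonneg abs_square_less_1)
    finally show ?thesis .
  qed
  have d0: "dist_set Bm (Qset1 s p q) \<ge> 0" by (rule dist_nonneg[OF W0Q])
  show ?thesis
  proof (cases "?RHS \<ge> 1")
    case True
    have "dist_set Bm (Qset1 s p q) \<le> fro_norm (Bm - W0)" by (rule dist_le[OF W0Q])
    hence "(dist_set Bm (Qset1 s p q))^2 \<le> (fro_norm (Bm - W0))^2" using d0 by (intro power_mono) auto
    thus ?thesis using close0 True unfolding Bm_def by linarith
  next
    case False
    obtain V lam where Vl: "V \<in> carrier_mat r r" "transpose_mat V * V = 1\<^sub>m r"
      "Ssym = V * mat_diag r lam * transpose_mat V" "\<forall>i<r. \<forall>j<r. blk i \<noteq> blk j \<longrightarrow> V $$ (i,j) = 0"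
      using spec_exists by blast
    interpret w: wsetting s p d K r a q Q V lam
      by unfold_locales (use Vl in auto)
    have bound: "(fro_norm (Bm - w.W))^2 \<le> ?RHS" using w.main_bound final_const by linarith
    hence close: "(fro_norm (Bm - w.W))^2 < 1" using False by linarith
    have sig: "card {k. k < r \<and> blk k = b \<and> w.sg k = 1} = card {k. k < r \<and> blk k = b \<and> q (k+1) = 1}"
      if b: "b \<in> {1..p}" for b
      by (rule w.signature[OF U0f(1) U0f(2) _ _ close b])
         (use U0f(3) close0 in \<open>auto simp: W0_def\<close>)
    have WQ: "w.W \<in> Qset1 s p q" by (rule w.W_in_Qset1[OF sig])
    have "dist_set Bm (Qset1 s p q) \<le> fro_norm (Bm - w.W)" by (rule dist_le[OF WQ])
    hence "(dist_set Bm (Qset1 s p q))^2 \<le> (fro_norm (Bm - w.W))^2" using d0 by (intro power_mono) auto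
    thus ?thesis using bound unfolding Bm_def by linarith
  qed
qed

end

theorem proposition5:
  fixes d K r p :: nat and a q :: "nat \<Rightarrow> real" and s :: "nat \<Rightarrow> nat" and Q :: "real mat"
  assumes "1 \<le> r" "r \<le> K" "K \<le> d"
    and a_mono: "\<And>i. 1 \<le> i \<Longrightarrow> i < r \<Longrightarrow> a i \<ge> a (i+1)"
    and a_pos: "a r > 0"
    and s0: "s 0 = 0" and sp: "s p = r" and s_mono: "\<And>i. i < p \<Longrightarrow> s i < s (i+1)"
    and a_blocks: "\<And>i k. i \<in> {1..p} \<Longrightarrow> s (i-1) < k \<Longrightarrow> k \<le> s i \<Longrightarrow> a k = a (s i)"
    and a_strict: "\<And>i. 1 \<le> i \<Longrightarrow> i < p \<Longrightarrow> a (s i) > a (s (i+1))"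
    and q_sign: "\<And>i. i \<in> {1..r} \<Longrightarrow> q i = 1 \<or> q i = -1"
    and Q_st: "Q \<in> stiefel d K"
    and Q_close: "dist_set Q (Qset d K s p q) < 1"
  shows "(dist_set (upper_left r Q) (Qset1 s p q))\<^sup>2
          \<le> 1 / (a r)\<^sup>2 * (10 + 6 * (6 * real p - 5) * inv_min_delta_sq a s p)
            * (fro_norm (R_res (A_mat d K r a) Q))\<^sup>2"
proof -
  interpret setting s p d K r a q Q
  proof unfold_locales
    show "\<And>i. i < p \<Longrightarrow> s i < s (Suc i)" using s_mono by simp
  qed (fact assms)+
  show ?thesis by (rule final_in_setting[OF Q_close])
qed


end
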